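(* Let $X$ be a compact topological space with the trivial filtration of formal dimension $n$ (a single stratum, which is regular). Give the open cone $\mathring cX$ the conical filtration $\{\mathtt v\}\subseteq\mathring cX$ and a perversity $\overline p$, determined by the value $\overline p(\mathtt v)$ on the apex. Set $m=D\overline p(\mathtt v)=(n+1)-2-\overline p(\mathtt v)$. Then the simplicial set $\mathscr G_{\overline p}(\mathring cX)$ is an $m$-Postnikov stage of the simplicial set $\mathrm{Sing}\,X$.
   Context: Cone. $\mathring cX=X\times[0,1[/X\times\{0\}$ has apex $\mathtt v=[x,0]$. It has formal dimension $n+1$, with the apex the only singular stratum (of codimension $n+1$). Full simplices and the Gajer space. A simplex $\sigma\colon\Delta^j\to\mathring cX$ is $\overline p$-allowable if $\dim\sigma^{-1}(\mathtt v)\le j-(n+1)+\overline p(\mathtt v)$. Here $\dim$ is polyhedral dimension, i.e. the minimal dimension of a polyhedron in $\Delta^j$ containing the set, with $\dim\emptyset=-\infty$. A simplex is $\overline p$-full if it and all its iterated faces are allowable. The $\overline p$-full simplices form a Kan simplicial subset $\mathscr G_{\overline p}(\mathring cX)$ of $\mathrm{Sing}(\mathring cX)$. Postnikov stage. $X$ is identified with $X\times\{1/2\}\subseteq\mathring cX\setminus\{\mathtt v\}$, so that $\mathrm{Sing}\,X$ maps into $\mathscr G_{\overline p}(\mathring cX)$. Being an $m$-Postnikov stage means that this map induces isomorphisms on $\pi_j$ for $j\le m$ (at every base point), and that $\pi_j(\mathscr G_{\overline p}(\mathring cX))=0$ for $j>m$. *)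

theory Defs
  imports "HOL-Analysis.Analysis" "HOL-Homology.Homology"
begin

text \<open>Points of the open cone: None is the apex v, Some (x,t) is the class of (x,t) with 0 < t < 1.\<close>

definition cone_quot :: "'a \<times> real \<Rightarrow> ('a \<times> real) option" where
  "cone_quot z = (if snd z = 0 then None else Some z)"

definition cone_pre :: "'a topology \<Rightarrow> ('a \<times> real) topology" where
  "cone_pre X = prod_topology X (subtopology euclideanreal {0..<1})"

text \<open>Quotient topology of X x [0,1[ by the map collapsing X x {0}.\<close>
definition open_cone :: "'a topology \<Rightarrow> ('a \<times> real) option topology" where
  "open_cone X = topology (\<lambda>U. U \<subseteq> cone_quot ` topspace (cone_pre X) \<and>
      openin (cone_pre X) {z \<in> topspace (cone_pre X). cone_quot z \<in> U})"

lemma istopology_open_cone: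
  "istopology (\<lambda>U. U \<subseteq> cone_quot ` topspace (cone_pre X) \<and>
      openin (cone_pre X) {z \<in> topspace (cone_pre X). cone_quot z \<in> U})"
proof -
  let ?P = "cone_pre X" and ?C = "cone_quot ` topspace (cone_pre X)"
  have 1: "openin ?P {z \<in> topspace ?P. cone_quot z \<in> S \<inter> T}"
    if "openin ?P {z \<in> topspace ?P. cone_quot z \<in> S}" "openin ?P {z \<in> topspace ?P. cone_quot z \<in> T}"
    for S T :: "('a \<times> real) option set"
  proof -
    have "{z \<in> topspace ?P. cone_quot z \<in> S \<inter> T} =
        {z \<in> topspace ?P. cone_quot z \<in> S} \<inter> {z \<in> topspace ?P. cone_quot z \<in> T}" by auto
    then show ?thesis using that by auto
  qed
  have 2: "openin ?P {z \<in> topspace ?P. cone_quot z \<in> \<Union>K}"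
    if "\<forall>U\<in>K. openin ?P {z \<in> topspace ?P. cone_quot z \<in> U}"
    for K :: "('a \<times> real) option set set"
  proof -
    have "{z \<in> topspace ?P. cone_quot z \<in> \<Union>K} =
        \<Union>((\<lambda>U. {z \<in> topspace ?P. cone_quot z \<in> U}) ` K)" by auto
    then show ?thesis using that by (auto intro!: openin_Union)
  qed
  show ?thesis unfolding istopology_def
    using 1 2 by blast
qed

definition cone_apex :: "('a \<times> real) option" where
  "cone_apex = None"

definition cone_incl :: "'a \<Rightarrow> ('a \<times> real) option" where
  "cone_incl x = Some (x, 1/2)"

text \<open>The polyhedral dimension of a set S is the
  minimal dimension of such a polyhedron containing S; hence dim S \<le> d iff S lies in a polyhedron
  of dimension \<le> d.\<close>

text \<open>Affine notions in the coordinate space nat \<Rightarrow> real (which carries no real_vector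
  instance in the library), written out explicitly for finite point sets.\<close>
definition conv_hull_fin :: "(nat \<Rightarrow> real) set \<Rightarrow> (nat \<Rightarrow> real) set" where
  "conv_hull_fin T = {u. \<exists>c. (\<forall>t\<in>T. 0 \<le> c t) \<and> (\<Sum>t\<in>T. c t) = 1 \<and>
                              u = (\<lambda>i. \<Sum>t\<in>T. c t * t i)}"

definition aff_indep_fin :: "(nat \<Rightarrow> real) set \<Rightarrow> bool" where
  "aff_indep_fin T \<longleftrightarrow> (\<forall>c. (\<Sum>t\<in>T. c t) = 0 \<and> (\<forall>i. (\<Sum>t\<in>T. c t * t i) = 0)
                             \<longrightarrow> (\<forall>t\<in>T. c t = 0))"

definition polyhedron_of_dim_le :: "nat \<Rightarrow> (nat \<Rightarrow> real) set \<Rightarrow> int \<Rightarrow> bool" where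
  "polyhedron_of_dim_le j P d \<longleftrightarrow>
     (\<exists>\<T>. finite \<T> \<and>
        (\<forall>T\<in>\<T>. finite T \<and> aff_indep_fin T \<and> T \<subseteq> standard_simplex j
                 \<and> int (card T) - 1 \<le> d) \<and>
        P = \<Union>(conv_hull_fin ` \<T>))"

definition poly_dim_le :: "nat \<Rightarrow> (nat \<Rightarrow> real) set \<Rightarrow> int \<Rightarrow> bool" where
  "poly_dim_le j S d \<longleftrightarrow> (\<exists>P. S \<subseteq> P \<and> polyhedron_of_dim_le j P d)"

definition allowable ::
  "nat \<Rightarrow> int \<Rightarrow> nat \<Rightarrow> ((nat \<Rightarrow> real) \<Rightarrow> ('a \<times> real) option) \<Rightarrow> bool" where
  "allowable n pv j \<sigma> \<longleftrightarrow>
     poly_dim_le j {u \<in> standard_simplex j. \<sigma> u = cone_apex} (int j - (int n + 1) + pv)"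

inductive iter_face :: "nat \<Rightarrow> ((nat \<Rightarrow> real) \<Rightarrow> 'b) \<Rightarrow> nat \<Rightarrow> ((nat \<Rightarrow> real) \<Rightarrow> 'b) \<Rightarrow> bool"
  for j \<sigma> where
  self: "iter_face j \<sigma> j \<sigma>"
| face: "iter_face j \<sigma> k \<tau> \<Longrightarrow> 1 \<le> k \<Longrightarrow> i \<le> k \<Longrightarrow>
          iter_face j \<sigma> (k - 1) (singular_face k i \<tau>)"

definition full :: "nat \<Rightarrow> int \<Rightarrow> nat \<Rightarrow> ((nat \<Rightarrow> real) \<Rightarrow> ('a \<times> real) option) \<Rightarrow> bool" where
  "full n pv j \<sigma> \<longleftrightarrow> (\<forall>k \<tau>. iter_face j \<sigma> k \<tau> \<longrightarrow> allowable n pv k \<tau>)"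

text \<open>The Gajer space G_p(cX): simplicial subset of Sing(cX) of p-full simplices, given by its
  sets of j-simplices (face maps are singular_face).\<close>
definition gajer :: "'a topology \<Rightarrow> nat \<Rightarrow> int \<Rightarrow> nat \<Rightarrow> ((nat \<Rightarrow> real) \<Rightarrow> ('a \<times> real) option) set" where
  "gajer X n pv j = {\<sigma>. singular_simplex j (open_cone X) \<sigma> \<and> full n pv j \<sigma>}"

definition Sing :: "'b topology \<Rightarrow> nat \<Rightarrow> ((nat \<Rightarrow> real) \<Rightarrow> 'b) set" where
  "Sing Y j = {\<sigma>. singular_simplex j Y \<sigma>}"

definition const_simplex :: "nat \<Rightarrow> 'b \<Rightarrow> (nat \<Rightarrow> real) \<Rightarrow> 'b" where
  "const_simplex j y = restrict (\<lambda>_. y) (standard_simplex j)"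

text \<open>Representatives of elements of pi_j(K, y): j-simplices all of whose faces are the degenerate
  simplex at y (for j = 0: all vertices).\<close>
definition sphere_reps :: "(nat \<Rightarrow> ((nat \<Rightarrow> real) \<Rightarrow> 'b) set) \<Rightarrow> nat \<Rightarrow> 'b \<Rightarrow> ((nat \<Rightarrow> real) \<Rightarrow> 'b) set" where
  "sphere_reps K j y = {\<sigma> \<in> K j. 0 < j \<longrightarrow> (\<forall>i\<le>j. singular_face j i \<sigma> = const_simplex (j - 1) y)}"

definition shomotopic :: "(nat \<Rightarrow> ((nat \<Rightarrow> real) \<Rightarrow> 'b) set) \<Rightarrow> nat \<Rightarrow> 'b \<Rightarrow>
     ((nat \<Rightarrow> real) \<Rightarrow> 'b) \<Rightarrow> ((nat \<Rightarrow> real) \<Rightarrow> 'b) \<Rightarrow> bool" where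
  "shomotopic K j y \<sigma> \<tau> \<longleftrightarrow>
     (\<exists>\<omega> \<in> K (Suc j). (\<forall>i<j. singular_face (Suc j) i \<omega> = const_simplex j y) \<and>
        singular_face (Suc j) j \<omega> = \<sigma> \<and> singular_face (Suc j) (Suc j) \<omega> = \<tau>)"

definition induces_bij_pi ::
  "(nat \<Rightarrow> ((nat \<Rightarrow> real) \<Rightarrow> 'b) set) \<Rightarrow> (nat \<Rightarrow> ((nat \<Rightarrow> real) \<Rightarrow> 'c) set) \<Rightarrow> ('b \<Rightarrow> 'c)
     \<Rightarrow> nat \<Rightarrow> 'b \<Rightarrow> bool" where
  "induces_bij_pi K L f j y \<longleftrightarrow>
     (\<forall>\<tau> \<in> sphere_reps L j (f y). \<exists>\<sigma> \<in> sphere_reps K j y.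
         shomotopic L j (f y) (restrict (f \<circ> \<sigma>) (standard_simplex j)) \<tau>) \<and>
     (\<forall>\<sigma> \<in> sphere_reps K j y. \<forall>\<sigma>' \<in> sphere_reps K j y.
         shomotopic L j (f y) (restrict (f \<circ> \<sigma>) (standard_simplex j))
                              (restrict (f \<circ> \<sigma>') (standard_simplex j))
         \<longrightarrow> shomotopic K j y \<sigma> \<sigma>')"

definition pi_trivial :: "(nat \<Rightarrow> ((nat \<Rightarrow> real) \<Rightarrow> 'b) set) \<Rightarrow> nat \<Rightarrow> 'b \<Rightarrow> bool" where
  "pi_trivial K j y \<longleftrightarrow>
     (\<forall>\<sigma> \<in> sphere_reps K j y. \<forall>\<tau> \<in> sphere_reps K j y. shomotopic K j y \<sigma> \<tau>)"

text \<open>G is an m-Postnikov stage of Sing X via the inclusion X = X x {1/2}: isomorphisms on pi_j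
  for j \<le> m at every base point, and pi_j G = 0 for j > m at every base point (vertex) of G.\<close>
definition postnikov_stage_cone :: "'a topology \<Rightarrow> nat \<Rightarrow> int \<Rightarrow> int \<Rightarrow> bool" where
  "postnikov_stage_cone X n pv m \<longleftrightarrow>
     (\<forall>j x. int j \<le> m \<longrightarrow> x \<in> topspace X \<longrightarrow>
        induces_bij_pi (Sing X) (gajer X n pv) cone_incl j x) \<and>
     (\<forall>j y. int j > m \<longrightarrow> const_simplex 0 y \<in> gajer X n pv 0 \<longrightarrow>
        pi_trivial (gajer X n pv) j y)"

end

theory Submission
  imports Defs
begin


definition tc :: "('a \<times> real) option \<Rightarrow> real" where
  "tc z = (case z of None \<Rightarrow> 0 | Some p \<Rightarrow> snd p)"
definition xc :: "('a \<times> real) option \<Rightarrow> 'a" where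
  "xc z = fst (the z)"

lemma tc_simps [simp]: "tc None = 0" "tc (Some (a,t)) = t"
  by (auto simp: tc_def)
lemma xc_simps [simp]: "xc (Some (a,t)) = a"
  by (auto simp: xc_def)

lemma topspace_cone_pre: "topspace (cone_pre X) = topspace X \<times> {0..<1}"
  by (simp add: cone_pre_def)

lemma openin_open_cone:
  "openin (open_cone X) U \<longleftrightarrow> U \<subseteq> cone_quot ` topspace (cone_pre X) \<and>
      openin (cone_pre X) {z \<in> topspace (cone_pre X). cone_quot z \<in> U}"
  unfolding open_cone_def using istopology_open_cone[of X] by simp

lemma topspace_open_cone_img: "topspace (open_cone X) = cone_quot ` topspace (cone_pre X)"
proof -
  have "{z \<in> topspace (cone_pre X). cone_quot z \<in> cone_quot ` topspace (cone_pre X)} = topspace (cone_pre X)"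
    by auto
  then have "openin (open_cone X) (cone_quot ` topspace (cone_pre X))"
    unfolding openin_open_cone by simp
  then have "cone_quot ` topspace (cone_pre X) \<subseteq> topspace (open_cone X)"
    by (simp add: openin_subset)
  moreover have "topspace (open_cone X) \<subseteq> cone_quot ` topspace (cone_pre X)"
    using openin_open_cone[of X "topspace (open_cone X)"] by simp
  ultimately show ?thesis by blast
qed

lemma topspace_open_cone:
  "topspace (open_cone X) = (if topspace X = {} then {} else
      insert None (Some ` (topspace X \<times> {0<..<1})))"
proof -
  have "cone_quot ` (topspace X \<times> {0..<1}) = (if topspace X = {} then {} else
      insert None (Some ` (topspace X \<times> {0<..<(1::real)})))"
  proof (cases "topspace X = {}")
    case False
    then obtain x where x: "x \<in> topspace X" by blast
    have "cone_quot ` (topspace X \<times> {0..<1}) = insert None (Some ` (topspace X \<times> {0<..<(1::real)}))"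
    proof (rule equalityI)
      show "cone_quot ` (topspace X \<times> {0..<1}) \<subseteq> insert None (Some ` (topspace X \<times> {0<..<(1::real)}))"
        by (auto simp: cone_quot_def)
      have "None \<in> cone_quot ` (topspace X \<times> {0..<1})"
        using x by (auto simp: cone_quot_def image_iff intro!: bexI[of _ "(x,0)"])
      moreover have "Some (a,t) \<in> cone_quot ` (topspace X \<times> {0..<1})"
        if "a \<in> topspace X" "0 < t" "t < 1" for a t
        using that by (auto simp: cone_quot_def image_iff intro!: bexI[of _ "(a,t)"])
      ultimately show "insert None (Some ` (topspace X \<times> {0<..<(1::real)})) \<subseteq> cone_quot ` (topspace X \<times> {0..<1})"
        by auto
    qed
    then show ?thesis using False by simp
  qed simp
  then show ?thesis by (simp add: topspace_open_cone_img topspace_cone_pre)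
qed

lemma in_topspace_open_cone:
  "z \<in> topspace (open_cone X) \<longleftrightarrow> topspace X \<noteq> {} \<and>
     (z = None \<or> (\<exists>a t. z = Some (a,t) \<and> a \<in> topspace X \<and> 0 < t \<and> t < 1))"
  by (auto simp: topspace_open_cone)

lemma tube_cone:
  assumes X: "compact_space X" and Q: "openin (cone_pre X) Q"
    and sub: "topspace X \<times> {0} \<subseteq> Q"
  shows "\<exists>e>0. \<forall>a t. a \<in> topspace X \<longrightarrow> 0 \<le> t \<longrightarrow> t < e \<longrightarrow> (a,t) \<in> Q"
proof -
  have "compactin X (topspace X)" using X by (simp add: compact_space_def)
  moreover have "(0::real) \<in> topspace (subtopology euclideanreal {0..<1})" by simp
  ultimately obtain U V where UV: "openin X U" "openin (subtopology euclideanreal {0..<1}) V"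
    "topspace X \<subseteq> U" "0 \<in> V" "U \<times> V \<subseteq> Q"
    using tube_lemma_left[of X "subtopology euclideanreal {0..<1}" Q "topspace X" 0] Q sub
    unfolding cone_pre_def by blast
  then obtain T where T: "open T" "V = T \<inter> {0..<1}"
    by (auto simp: openin_subtopology)
  then obtain e where e: "e > 0" "ball 0 e \<subseteq> T" using UV(4)
    by (meson IntD1 openE)
  have "0 < min e 1" using e by simp
  moreover have "\<forall>a t. a \<in> topspace X \<longrightarrow> 0 \<le> t \<longrightarrow> t < min e 1 \<longrightarrow> (a,t) \<in> Q"
  proof (intro allI impI)
    fix a t assume "a \<in> topspace X" "0 \<le> t" "t < min e 1"
    then have "t \<in> V" using T e by (auto simp: dist_real_def)
    then show "(a,t) \<in> Q" using \<open>a \<in> topspace X\<close> UV by blast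
  qed
  ultimately show ?thesis by blast
qed

lemma cone_cont:
  assumes X: "compact_space X"
    and f: "f \<in> topspace Z \<rightarrow> topspace (open_cone X)"
    and ct: "continuous_map Z euclideanreal (tc \<circ> f)"
    and cx: "continuous_map (subtopology Z {z \<in> topspace Z. f z \<noteq> None}) X (xc \<circ> f)"
  shows "continuous_map Z (open_cone X) f"
  unfolding continuous_map_def
proof (intro conjI allI impI)
  show "f \<in> topspace Z \<rightarrow> topspace (open_cone X)" by fact
  fix U assume U: "openin (open_cone X) U"
  define Q where "Q = {z \<in> topspace (cone_pre X). cone_quot z \<in> U}"
  have Q: "openin (cone_pre X) Q" using U by (simp add: openin_open_cone Q_def)
  have ne: "{z \<in> topspace Z. f z \<noteq> None} = {z \<in> topspace Z. tc (f z) \<in> {0<..}}"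
    using f by (force simp: in_topspace_open_cone Pi_iff)
  have opne: "openin Z {z \<in> topspace Z. f z \<noteq> None}"
    unfolding ne using openin_continuous_map_preimage[OF ct, of "{0<..}"] by simp
  show "openin Z {z \<in> topspace Z. f z \<in> U}"
  proof (subst openin_subopen, intro ballI)
    fix z assume z: "z \<in> {z \<in> topspace Z. f z \<in> U}"
    show "\<exists>T. openin Z T \<and> z \<in> T \<and> T \<subseteq> {z \<in> topspace Z. f z \<in> U}"
    proof (cases "f z")
      case None
      have nX: "topspace X \<noteq> {}" using f z by (auto simp: in_topspace_open_cone Pi_iff)
      have "topspace X \<times> {0} \<subseteq> Q"
        using None z by (auto simp: Q_def topspace_cone_pre cone_quot_def)
      then obtain e where e: "e > 0" "\<And>a t. a \<in> topspace X \<Longrightarrow> 0 \<le> t \<Longrightarrow> t < e \<Longrightarrow> (a,t) \<in> Q"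
        using tube_cone[OF X Q] by blast
      define T where "T = {z \<in> topspace Z. (tc \<circ> f) z \<in> {..<e}}"
      have "openin Z T" unfolding T_def by (rule openin_continuous_map_preimage[OF ct]) auto
      moreover have "z \<in> T" using z None e by (auto simp: T_def)
      moreover have "T \<subseteq> {z \<in> topspace Z. f z \<in> U}"
      proof
        fix w assume w: "w \<in> T"
        then have fw: "f w \<in> topspace (open_cone X)" using f by (auto simp: T_def)
        show "w \<in> {z \<in> topspace Z. f z \<in> U}"
        proof (cases "f w")
          case None
          then show ?thesis using w z \<open>f z = None\<close> by (auto simp: T_def)
        next
          case (Some p)
          then obtain a t where "f w = Some (a,t)" "a \<in> topspace X" "0 < t" "t < 1"
            using fw by (auto simp: in_topspace_open_cone)
          moreover then have "(a,t) \<in> Q" using e w by (auto simp: T_def)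
          ultimately show ?thesis using w by (auto simp: T_def Q_def cone_quot_def)
        qed
      qed
      ultimately show ?thesis by blast
    next
      case (Some p)
      define Z' where "Z' = {z \<in> topspace Z. f z \<noteq> None}"
      have g: "continuous_map (subtopology Z Z') (cone_pre X) (\<lambda>w. (xc (f w), tc (f w)))"
        unfolding cone_pre_def continuous_map_paired
      proof (intro conjI)
        show "continuous_map (subtopology Z Z') X (\<lambda>x. xc (f x))"
          using cx by (simp add: Z'_def o_def)
        have "continuous_map (subtopology Z Z') euclideanreal (\<lambda>x. tc (f x))"
          using ct by (simp add: continuous_map_from_subtopology o_def)
        moreover have "tc (f w) \<in> {0..<1}" if "w \<in> topspace Z" for w
          using f that by (auto simp: in_topspace_open_cone Pi_iff)
        ultimately show "continuous_map (subtopology Z Z') (subtopology euclideanreal {0..<1}) (\<lambda>x. tc (f x))"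
          by (auto simp: continuous_map_in_subtopology)
      qed
      define T where "T = {w \<in> topspace (subtopology Z Z'). (xc (f w), tc (f w)) \<in> Q}"
      have "openin (subtopology Z Z') T"
        unfolding T_def by (rule openin_continuous_map_preimage[OF g Q])
      then have "openin Z T" using opne by (simp add: Z'_def openin_trans_full)
      moreover have "z \<in> T"
      proof -
        obtain a t where "f z = Some (a,t)" "a \<in> topspace X" "0 < t" "t < 1"
          using f z Some by (force simp: in_topspace_open_cone Pi_iff)
        then show ?thesis using z by (auto simp: T_def Z'_def Q_def topspace_cone_pre cone_quot_def)
      qed
      moreover have "T \<subseteq> {z \<in> topspace Z. f z \<in> U}"
      proof
        fix w assume w: "w \<in> T"
        then obtain a t where "f w = Some (a,t)" "0 < t" using f by (force simp: T_def Z'_def in_topspace_open_cone Pi_iff)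
        then show "w \<in> {z \<in> topspace Z. f z \<in> U}" using w
          by (auto simp: T_def Z'_def Q_def cone_quot_def split: if_splits)
      qed
      ultimately show ?thesis by blast
    qed
  qed
qed


lemma conv_hull_fin_empty [simp]: "conv_hull_fin {} = {}"
  by (simp add: conv_hull_fin_def)

lemma poly_dim_le_empty: "poly_dim_le j {} d"
  unfolding poly_dim_le_def polyhedron_of_dim_le_def
  by (rule exI[of _ "{}"], rule conjI, simp, rule exI[of _ "{}"]) auto

lemma poly_dim_le_neg:
  assumes "poly_dim_le j S d" "d < 0" shows "S = {}"
proof -
  obtain P \<T> where P: "S \<subseteq> P" "finite \<T>"
    "\<forall>T\<in>\<T>. finite T \<and> aff_indep_fin T \<and> T \<subseteq> standard_simplex j \<and> int (card T) - 1 \<le> d"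
    "P = \<Union>(conv_hull_fin ` \<T>)"
    using assms(1) unfolding poly_dim_le_def polyhedron_of_dim_le_def
    by (-, elim exE conjE) blast
  have "T = {}" if "T \<in> \<T>" for T
  proof -
    have "finite T" "int (card T) - 1 \<le> d" using P(3) that by auto
    then have "card T = 0" using assms(2) by linarith
    then show ?thesis using \<open>finite T\<close> by simp
  qed
  then have "\<forall>T\<in>\<T>. conv_hull_fin T = {}" by (metis conv_hull_fin_empty)
  then have "\<Union>(conv_hull_fin ` \<T>) = {}" by blast
  then show ?thesis using P(1,4) by simp
qed

lemma poly_dim_le_mono:
  assumes "poly_dim_le j S d" "S' \<subseteq> S" "d \<le> d'" shows "poly_dim_le j S' d'"
proof -
  obtain P where "S \<subseteq> P" "polyhedron_of_dim_le j P d" using assms(1) unfolding poly_dim_le_def by blast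
  then have "S' \<subseteq> P" "polyhedron_of_dim_le j P d'"
    using assms(2,3) unfolding polyhedron_of_dim_le_def by (blast, fastforce)
  then show ?thesis unfolding poly_dim_le_def by blast
qed

lemma poly_dim_le_Un:
  assumes "poly_dim_le j A d" "poly_dim_le j B d" shows "poly_dim_le j (A \<union> B) d"
proof -
  obtain P \<T> where P: "A \<subseteq> P" "finite \<T>"
    "\<forall>T\<in>\<T>. finite T \<and> aff_indep_fin T \<and> T \<subseteq> standard_simplex j \<and> int (card T) - 1 \<le> d"
    "P = \<Union>(conv_hull_fin ` \<T>)"
    using assms(1) unfolding poly_dim_le_def polyhedron_of_dim_le_def
    by (-, elim exE conjE) blast
  obtain Q \<U> where Q: "B \<subseteq> Q" "finite \<U>"
    "\<forall>T\<in>\<U>. finite T \<and> aff_indep_fin T \<and> T \<subseteq> standard_simplex j \<and> int (card T) - 1 \<le> d"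
    "Q = \<Union>(conv_hull_fin ` \<U>)"
    using assms(2) unfolding poly_dim_le_def polyhedron_of_dim_le_def
    by (-, elim exE conjE) blast
  show ?thesis unfolding poly_dim_le_def polyhedron_of_dim_le_def
    apply (rule exI[of _ "P \<union> Q"], rule conjI)
    using P Q apply blast
    apply (rule exI[of _ "\<T> \<union> \<U>"])
    using P Q by auto
qed

lemma poly_dim_le_single:
  assumes "x \<in> standard_simplex j" "0 \<le> d" shows "poly_dim_le j {x} d"
proof -
  have "{x} \<subseteq> conv_hull_fin {x}"
    by (auto simp: conv_hull_fin_def intro!: exI[of _ "\<lambda>_. 1"])
  moreover have "aff_indep_fin {x}" by (simp add: aff_indep_fin_def)
  ultimately show ?thesis
    unfolding poly_dim_le_def polyhedron_of_dim_le_def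
    apply (intro exI[of _ "conv_hull_fin {x}"] conjI)
     apply assumption
    apply (rule exI[of _ "{{x}}"])
    using assms by auto
qed

definition ebasis :: "nat \<Rightarrow> nat \<Rightarrow> real" where
  "ebasis i = (\<lambda>k. if k = i then 1 else 0)"

lemma poly_dim_le_whole:
  assumes "int j \<le> d" "S \<subseteq> standard_simplex j" shows "poly_dim_le j S d"
proof -
  let ?T = "ebasis ` {..j}"
  have inj: "inj_on ebasis {..j}"
    by (auto simp: inj_on_def ebasis_def fun_eq_iff)
  have card: "card ?T = Suc j" using inj by (simp add: card_image)
  have sumi: "(\<Sum>t\<in>?T. c t * t i) = (if i \<le> j then c (ebasis i) else 0)" for c :: "(nat \<Rightarrow> real) \<Rightarrow> real" and i
  proof -
    have "(\<Sum>t\<in>?T. c t * t i) = (\<Sum>l\<le>j. c (ebasis l) * ebasis l i)"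
      using inj by (simp add: sum.reindex)
    also have "\<dots> = (\<Sum>l\<le>j. if l = i then c (ebasis i) else 0)"
      by (rule sum.cong) (auto simp: ebasis_def)
    also have "\<dots> = (if i \<le> j then c (ebasis i) else 0)"
      by (simp add: sum.delta)
    finally show ?thesis .
  qed
  have ai: "aff_indep_fin ?T"
    unfolding aff_indep_fin_def
  proof (intro allI impI ballI)
    fix c t assume c: "sum c ?T = 0 \<and> (\<forall>i. (\<Sum>t\<in>?T. c t * t i) = 0)" and t: "t \<in> ?T"
    then obtain i where "i \<le> j" "t = ebasis i" by auto
    then show "c t = 0" using c sumi[of c i] by simp
  qed
  have sub: "standard_simplex j \<subseteq> conv_hull_fin ?T"
  proof
    fix u assume u: "u \<in> standard_simplex j"
    define c where "c = (\<lambda>t. u (SOME i. i \<le> j \<and> t = ebasis i))"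
    have ce: "c (ebasis i) = u i" if "i \<le> j" for i
    proof -
      have "(SOME l. l \<le> j \<and> ebasis i = ebasis l) = i"
        using that inj by (intro some_equality) (auto simp: inj_on_def)
      then show ?thesis by (simp add: c_def)
    qed
    have "sum c ?T = (\<Sum>i\<le>j. u i)" using inj by (simp add: sum.reindex ce)
    also have "\<dots> = 1" using u by (simp add: standard_simplex_def)
    finally have s1: "sum c ?T = 1" .
    have "u = (\<lambda>i. \<Sum>t\<in>?T. c t * t i)"
      using u by (auto simp: sumi ce fun_eq_iff standard_simplex_def)
    moreover have "\<forall>t\<in>?T. 0 \<le> c t" using u ce by (auto simp: standard_simplex_def)
    ultimately show "u \<in> conv_hull_fin ?T" using s1 unfolding conv_hull_fin_def by blast
  qed
  show ?thesis
    unfolding poly_dim_le_def polyhedron_of_dim_le_def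
    apply (rule exI[of _ "conv_hull_fin ?T"], rule conjI)
    using sub assms apply blast
    apply (rule exI[of _ "{?T}"])
    using ai card assms by (auto simp: ebasis_def)
qed


definition bary :: "nat \<Rightarrow> nat \<Rightarrow> real" where
  "bary p = (\<lambda>i. if i \<le> p then 1 / (real p + 1) else 0)"

lemma bary_in: "bary p \<in> standard_simplex p"
  by (auto simp: bary_def standard_simplex_def)

lemma inj_simplical_face: "inj (simplical_face k :: (nat \<Rightarrow> real) \<Rightarrow> _)"
proof (rule injI)
  fix x y :: "nat \<Rightarrow> real" assume eq: "simplical_face k x = simplical_face k y"
  show "x = y"
  proof
    fix i
    show "x i = y i"
    proof (cases "i < k")
      case True then show ?thesis using fun_cong[OF eq, of i] by (simp add: simplical_face_def)
    next
      case False then show ?thesis using fun_cong[OF eq, of "Suc i"] by (simp add: simplical_face_def)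
    qed
  qed
qed

lemma sum_face_coord:
  fixes c :: "(nat \<Rightarrow> real) \<Rightarrow> real"
  shows "(\<Sum>t\<in>T. c t * simplical_face k t i) = simplical_face k (\<lambda>i. \<Sum>t\<in>T. c t * t i) i"
  by (simp add: simplical_face_def)

lemma face_in_aux:
  assumes "k \<le> Suc p" "x \<in> standard_simplex p"
  shows "simplical_face k x \<in> standard_simplex (Suc p)"
  using simplical_face_in_standard_simplex[of "Suc p" k x] assms by simp

lemma poly_cone:
  assumes S: "poly_dim_le p S d" and k: "k \<le> Suc p"
  shows "poly_dim_le (Suc p)
    {(\<lambda>i. (1-r) * bary (Suc p) i + r * simplical_face k s i) | s r. s \<in> S \<and> 0 \<le> r \<and> r \<le> 1} (d+1)"
proof -
  obtain P where P1: "S \<subseteq> P" and P2: "polyhedron_of_dim_le p P d"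
    using S unfolding poly_dim_le_def by blast
  obtain \<T> where P0: "finite \<T>"
    "\<forall>T\<in>\<T>. finite T \<and> aff_indep_fin T \<and> T \<subseteq> standard_simplex p \<and> int (card T) - 1 \<le> d"
    "P = \<Union>(conv_hull_fin ` \<T>)"
    using P2 unfolding polyhedron_of_dim_le_def by blast
  have P: "S \<subseteq> P" "finite \<T>"
    "\<And>T. T\<in>\<T> \<Longrightarrow> finite T \<and> aff_indep_fin T \<and> T \<subseteq> standard_simplex p \<and> int (card T) - 1 \<le> d"
    "P = \<Union>(conv_hull_fin ` \<T>)"
    using P0 P1 by simp_all
  define B where "B = bary (Suc p)"
  define F where "F = (simplical_face k :: (nat \<Rightarrow> real) \<Rightarrow> _)"
  have injF: "inj_on F A" for A
    using inj_on_subset[OF inj_simplical_face[of k] subset_UNIV] unfolding F_def .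
  have Fk: "F t k = 0" for t by (simp add: F_def simplical_face_def)
  have Bk: "B k \<noteq> 0" using k by (simp add: B_def bary_def)
  have BF: "B \<notin> F ` T" for T
  proof
    assume "B \<in> F ` T"
    then obtain t where "B = F t" by blast
    then show False using Fk[of t] Bk by simp
  qed
  define C where "C T = insert B (F ` T)" for T
  have fin: "finite (C T)" if "T \<in> \<T>" for T using P(3)[OF that] by (simp add: C_def)
  have card: "card (C T) = Suc (card T)" if "T \<in> \<T>" for T
    using P(3)[OF that] BF injF by (simp add: C_def card_image)
  have sub: "C T \<subseteq> standard_simplex (Suc p)" if "T \<in> \<T>" for T
  proof -
    have "F t \<in> standard_simplex (Suc p)" if "t \<in> T" for t
      using P(3)[OF \<open>T \<in> \<T>\<close>] k face_in_aux that unfolding F_def by blast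
    then show ?thesis using bary_in[of "Suc p"] unfolding C_def B_def by blast
  qed
  have sumC: "(\<Sum>t\<in>C T. g t) = g B + (\<Sum>t\<in>T. g (F t))" if "T \<in> \<T>" for T and g :: "_ \<Rightarrow> real"
    using P(3)[OF that] BF injF by (simp add: C_def sum.reindex)
  have ai: "aff_indep_fin (C T)" if T: "T \<in> \<T>" for T
    unfolding aff_indep_fin_def
  proof (intro allI impI ballI)
    fix c t assume c: "sum c (C T) = 0 \<and> (\<forall>i. (\<Sum>t\<in>C T. c t * t i) = 0)" and t: "t \<in> C T"
    have ci: "c B * B i + (\<Sum>t\<in>T. c (F t) * F t i) = 0" for i
      using c sumC[OF T, of "\<lambda>t. c t * t i"] by simp
    have cB: "c B = 0" using ci[of k] Fk Bk by simp
    have s0: "(\<Sum>t\<in>T. c (F t)) = 0" using c sumC[OF T, of c] cB by simp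
    have "(\<Sum>t\<in>T. c (F t) * t i) = 0" for i
    proof (cases "i < k")
      case True
      then show ?thesis using ci[of i] cB by (simp add: F_def simplical_face_def)
    next
      case False
      then show ?thesis using ci[of "Suc i"] cB by (simp add: F_def simplical_face_def)
    qed
    then have "\<forall>t\<in>T. c (F t) = 0"
      using P(3)[OF T] s0 unfolding aff_indep_fin_def
      by (metis (no_types, lifting) sum.cong)
    then show "c t = 0" using t cB by (auto simp: C_def)
  qed
  have conv: "(\<lambda>i. (1-r) * B i + r * F s i) \<in> conv_hull_fin (C T)"
    if T: "T \<in> \<T>" and s: "s \<in> conv_hull_fin T" and r: "0 \<le> r" "r \<le> 1" for T s r
  proof -
    obtain c where c: "\<forall>t\<in>T. 0 \<le> c t" "sum c T = 1" "s = (\<lambda>i. \<Sum>t\<in>T. c t * t i)"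
      using s by (auto simp: conv_hull_fin_def)
    define c' where "c' x = (if x = B then 1 - r else r * c (inv_into T F x))" for x
    have c'F: "c' (F t) = r * c t" if "t \<in> T" for t
      using that BF injF by (auto simp: c'_def)
    have "sum c' (C T) = 1"
      using sumC[OF T, of c'] c'F c(2) by (simp add: c'_def sum_distrib_left[symmetric])
    moreover have "\<forall>t\<in>C T. 0 \<le> c' t"
      using c(1) c'F r by (auto simp: C_def c'_def)
    moreover have "(\<lambda>i. (1-r) * B i + r * F s i) = (\<lambda>i. \<Sum>t\<in>C T. c' t * t i)"
    proof
      fix i
      have "(\<Sum>t\<in>C T. c' t * t i) = (1 - r) * B i + (\<Sum>t\<in>T. r * c t * F t i)"
        using sumC[OF T, of "\<lambda>t. c' t * t i"] c'F by (simp add: c'_def)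
      also have "\<dots> = (1 - r) * B i + r * (\<Sum>t\<in>T. c t * F t i)"
        by (simp add: sum_distrib_left mult.assoc)
      also have "\<dots> = (1 - r) * B i + r * F s i"
        using c(3) by (simp add: F_def sum_face_coord)
      finally show "(1-r) * B i + r * F s i = (\<Sum>t\<in>C T. c' t * t i)" by simp
    qed
    ultimately show ?thesis unfolding conv_hull_fin_def by blast
  qed
  show ?thesis
    unfolding poly_dim_le_def polyhedron_of_dim_le_def
  proof (intro exI conjI)
    show "{(\<lambda>i. (1-r) * bary (Suc p) i + r * simplical_face k s i) | s r. s \<in> S \<and> 0 \<le> r \<and> r \<le> 1}
       \<subseteq> \<Union>(conv_hull_fin ` (C ` \<T>))"
      using conv P(1,4) by (fastforce simp: B_def F_def)
    show "finite (C ` \<T>)" using P(2) by simp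
    show "\<forall>T\<in>C ` \<T>. finite T \<and> aff_indep_fin T \<and> T \<subseteq> standard_simplex (Suc p) \<and> int (card T) - 1 \<le> d + 1"
      using fin ai sub card P(3) by fastforce
  qed simp
qed


lemma cont_snd_cone: "continuous_map (cone_pre X) euclideanreal snd"
  unfolding cone_pre_def
  using continuous_map_snd[of X "subtopology euclideanreal {0..<1}"]
  by (simp add: continuous_map_in_subtopology)

lemma cont_tc: "continuous_map (open_cone X) euclideanreal tc"
  unfolding continuous_map_def
proof (intro conjI allI impI)
  show "tc \<in> topspace (open_cone X) \<rightarrow> topspace euclideanreal" by simp
  fix U :: "real set" assume U: "openin euclideanreal U"
  have eq: "{q \<in> topspace (cone_pre X). cone_quot q \<in> {z \<in> topspace (open_cone X). tc z \<in> U}}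
      = {q \<in> topspace (cone_pre X). snd q \<in> U}"
    by (auto simp: topspace_open_cone_img cone_quot_def)
  show "openin (open_cone X) {z \<in> topspace (open_cone X). tc z \<in> U}"
    unfolding openin_open_cone eq
  proof
    show "{z \<in> topspace (open_cone X). tc z \<in> U} \<subseteq> cone_quot ` topspace (cone_pre X)"
      by (auto simp: topspace_open_cone_img)
    show "openin (cone_pre X) {q \<in> topspace (cone_pre X). snd q \<in> U}"
      using openin_continuous_map_preimage[OF cont_snd_cone U] .
  qed
qed

lemma cont_xc: "continuous_map (subtopology (open_cone X) (topspace (open_cone X) - {None})) X xc"
  unfolding continuous_map_def
proof (intro conjI allI impI)
  show "xc \<in> topspace (subtopology (open_cone X) (topspace (open_cone X) - {None})) \<rightarrow> topspace X"
    by (auto simp: in_topspace_open_cone)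
  fix W assume W: "openin X W"
  define V where "V = {z \<in> topspace (open_cone X). z \<noteq> None \<and> xc z \<in> W}"
  have eq: "{q \<in> topspace (cone_pre X). cone_quot q \<in> V} = W \<times> {0<..<1}"
    using openin_subset[OF W]
    by (auto simp: V_def topspace_open_cone_img topspace_cone_pre cone_quot_def image_iff)
  have "openin (subtopology euclideanreal {0..<1}) {0<..<(1::real)}"
    unfolding openin_subtopology by (intro exI[of _ "{0<..<1}"]) auto
  then have "openin (cone_pre X) (W \<times> {0<..<1})"
    unfolding cone_pre_def using W by (simp add: openin_prod_Times_iff)
  then have V: "openin (open_cone X) V"
    unfolding openin_open_cone eq
    by (auto simp: V_def topspace_open_cone_img)
  have "{x \<in> topspace (subtopology (open_cone X) (topspace (open_cone X) - {None})). xc x \<in> W}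
      = V \<inter> (topspace (open_cone X) - {None})"
    by (auto simp: V_def)
  then show "openin (subtopology (open_cone X) (topspace (open_cone X) - {None}))
     {x \<in> topspace (subtopology (open_cone X) (topspace (open_cone X) - {None})). xc x \<in> W}"
    using V by (auto simp: openin_subtopology)
qed

lemma cont_squeeze:
  assumes g: "continuous_map Z euclideanreal g"
    and h: "continuous_map (subtopology Z {z \<in> topspace Z. g z > 0}) euclideanreal h"
    and bd: "\<And>z. z \<in> topspace Z \<Longrightarrow> \<bar>h z\<bar> \<le> g z"
  shows "continuous_map Z euclideanreal h"
  unfolding continuous_map_def
proof (intro conjI allI impI)
  show "h \<in> topspace Z \<rightarrow> topspace euclideanreal" by simp
  fix U :: "real set" assume U: "openin euclideanreal U"
  define A where "A = {z \<in> topspace Z. g z > 0}"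
  have A: "openin Z A"
    using openin_continuous_map_preimage[OF g, of "{0<..}"] by (simp add: A_def)
  show "openin Z {z \<in> topspace Z. h z \<in> U}"
  proof (subst openin_subopen, intro ballI)
    fix z assume z: "z \<in> {z \<in> topspace Z. h z \<in> U}"
    show "\<exists>T. openin Z T \<and> z \<in> T \<and> T \<subseteq> {z \<in> topspace Z. h z \<in> U}"
    proof (cases "g z > 0")
      case True
      define T where "T = {z \<in> topspace (subtopology Z A). h z \<in> U}"
      have "openin (subtopology Z A) T"
        unfolding T_def using openin_continuous_map_preimage[OF h[folded A_def] U] .
      then have "openin Z T" using A openin_trans_full by blast
      moreover have "z \<in> T" using z True by (auto simp: T_def A_def)
      moreover have "T \<subseteq> {z \<in> topspace Z. h z \<in> U}" by (auto simp: T_def)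
      ultimately show ?thesis by blast
    next
      case False
      then have "h z = 0" using bd[of z] z by auto
      then have "0 \<in> U" using z by auto
      then obtain e where e: "e > 0" "ball 0 e \<subseteq> U" using U by (auto simp: open_contains_ball)
      define T where "T = {z \<in> topspace Z. g z \<in> {..<e}}"
      have "openin Z T" unfolding T_def by (rule openin_continuous_map_preimage[OF g]) auto
      moreover have "z \<in> T" using z False e by (auto simp: T_def)
      moreover have "T \<subseteq> {z \<in> topspace Z. h z \<in> U}"
      proof
        fix w assume "w \<in> T"
        then have "\<bar>h w\<bar> < e" "w \<in> topspace Z" using bd[of w] by (auto simp: T_def)
        then show "w \<in> {z \<in> topspace Z. h z \<in> U}" using e by (auto simp: dist_real_def)
      qed
      ultimately show ?thesis by blast
    qed
  qed
qed


definition del :: "nat \<Rightarrow> (nat \<Rightarrow> real) \<Rightarrow> nat \<Rightarrow> real" where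
  "del k w = (\<lambda>i. if i < k then w i else w (Suc i))"

lemma del_face [simp]: "del k (simplical_face k v) = v"
  by (auto simp: del_def simplical_face_def fun_eq_iff)

lemma face_del: "w k = 0 \<Longrightarrow> simplical_face k (del k w) = w"
proof
  fix i assume wk: "w k = 0"
  show "simplical_face k (del k w) i = w i"
  proof (cases i)
    case 0 then show ?thesis using wk by (auto simp: del_def simplical_face_def)
  next
    case (Suc l) then show ?thesis using wk by (auto simp: del_def simplical_face_def)
  qed
qed

lemma del_in_simplex:
  assumes w: "w \<in> standard_simplex (Suc p)" and k: "k \<le> Suc p" and wk: "w k = 0"
  shows "del k w \<in> standard_simplex p"
proof -
  have w01: "\<And>i. 0 \<le> w i \<and> w i \<le> 1" and w0: "\<And>i. i > Suc p \<Longrightarrow> w i = 0" and ws: "(\<Sum>i\<le>Suc p. w i) = 1"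
    using w by (auto simp: standard_simplex_def)
  have "(\<Sum>i\<le>Suc p. w i) = (\<Sum>i\<le>Suc p. simplical_face k (del k w) i)"
    using face_del[of w k, OF wk] by simp
  also have "\<dots> = (\<Sum>i\<le>Suc p. if i < k then del k w i else if i = k then 0 else del k w (i - Suc 0))"
    unfolding simplical_face_def by (simp only: One_nat_def)
  also have "\<dots> = (\<Sum>i\<le>p. if i < k then del k w i else del k w i)"
    using sum.zero_middle[of "Suc p" k "del k w" "del k w"] k by simp
  also have "\<dots> = (\<Sum>i\<le>p. del k w i)" by simp
  finally have "(\<Sum>i\<le>p. del k w i) = 1" using ws by simp
  moreover have "\<forall>i. 0 \<le> del k w i \<and> del k w i \<le> 1" using w01 by (simp add: del_def)
  moreover have "\<forall>i>p. del k w i = 0" using w0 k by (auto simp: del_def)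
  ultimately show ?thesis by (simp add: standard_simplex_def)
qed

lemma face_in_simplex:
  assumes "k \<le> Suc p" "x \<in> standard_simplex p"
  shows "simplical_face k x \<in> standard_simplex (Suc p)"
  using simplical_face_in_standard_simplex[of "Suc p" k x] assms by simp

lemma cont_face:
  assumes "k \<le> Suc p"
  shows "continuous_map (subtopology (powertop_real UNIV) (standard_simplex p))
           (subtopology (powertop_real UNIV) (standard_simplex (Suc p))) (simplical_face k)"
proof -
  have "continuous_map (powertop_real UNIV) euclideanreal (\<lambda>x. simplical_face k x i)" for i
    by (auto simp: simplical_face_def intro: continuous_map_product_projection)
  then show ?thesis
    using assms face_in_simplex
    by (auto simp: continuous_map_in_subtopology continuous_map_componentwise continuous_map_from_subtopology)
qed

lemma cont_del:
  assumes "k \<le> Suc p" "S \<subseteq> {w \<in> standard_simplex (Suc p). w k = 0}"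
  shows "continuous_map (subtopology (powertop_real UNIV) S)
           (subtopology (powertop_real UNIV) (standard_simplex p)) (del k)"
proof -
  have "continuous_map (powertop_real UNIV) euclideanreal (\<lambda>x. del k x i)" for i
    by (auto simp: del_def intro: continuous_map_product_projection)
  moreover have "del k w \<in> standard_simplex p" if "w \<in> S" for w
    using assms that del_in_simplex by blast
  ultimately show ?thesis
    by (auto simp: continuous_map_in_subtopology continuous_map_componentwise continuous_map_from_subtopology)
qed

lemma simplex0_coord: "v \<in> standard_simplex 0 \<Longrightarrow> v 0 = 1"
  by (simp add: standard_simplex_0)

lemma sphere_bdry:
  assumes rho: "\<rho> \<in> sphere_reps K j y" and v: "v \<in> standard_simplex j" and k: "k \<le> j" and vk: "v k = 0"
  shows "\<rho> v = y"
proof (cases j)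
  case 0
  then have "v 0 = 1" using v simplex0_coord by simp
  then show ?thesis using 0 k vk by simp
next
  case (Suc p)
  have "singular_face j k \<rho> = const_simplex (j - 1) y"
    using rho k Suc by (auto simp: sphere_reps_def)
  moreover have "del k v \<in> standard_simplex p"
    using del_in_simplex[of v p k] v k vk Suc by simp
  ultimately have "singular_face j k \<rho> (del k v) = y"
    using Suc by (simp add: const_simplex_def)
  then show ?thesis
    using Suc \<open>del k v \<in> standard_simplex p\<close> by (simp add: singular_face_def face_del[of v k, OF vk])
qed

lemma face_const:
  assumes "1 \<le> p" "k \<le> p"
  shows "singular_face p k (const_simplex p y) = const_simplex (p - 1) y"
proof -
  obtain q where p: "p = Suc q" using assms by (cases p) auto
  show ?thesis
    using face_in_simplex[of k q] assms p
    by (auto simp: singular_face_def const_simplex_def fun_eq_iff)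
qed

lemma iter_face_le: "iter_face j \<sigma> k \<tau> \<Longrightarrow> k \<le> j"
  by (induction rule: iter_face.induct) auto

lemma iter_face_decomp:
  assumes "iter_face j \<sigma> k \<tau>"
  shows "(k = j \<and> \<tau> = \<sigma>) \<or> (k < j \<and> (\<exists>i\<le>j. iter_face (j - 1) (singular_face j i \<sigma>) k \<tau>))"
  using assms
proof (induction rule: iter_face.induct)
  case self
  then show ?case by simp
next
  case (face k \<tau> i)
  from face.IH show ?case
  proof
    assume "k = j \<and> \<tau> = \<sigma>"
    then show ?thesis using face.hyps iter_face.self by fastforce
  next
    assume "k < j \<and> (\<exists>i\<le>j. iter_face (j - 1) (singular_face j i \<sigma>) k \<tau>)"
    then obtain i' where "k < j" "i' \<le> j" "iter_face (j - 1) (singular_face j i' \<sigma>) k \<tau>" by blast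
    then have "iter_face (j - 1) (singular_face j i' \<sigma>) (k - 1) (singular_face k i \<tau>)"
      using face.hyps iter_face.face by blast
    then show ?thesis using \<open>k < j\<close> \<open>i' \<le> j\<close> by auto
  qed
qed

lemma iter_face_const:
  assumes "iter_face j (const_simplex j y) k \<tau>"
  shows "\<tau> = const_simplex k y"
  using assms
  by (induction rule: iter_face.induct) (auto simp: face_const)

lemma iter_face_vals:
  assumes "iter_face j \<sigma> k \<tau>" "u \<in> standard_simplex k"
  shows "\<exists>v \<in> standard_simplex j. \<tau> u = \<sigma> v"
  using assms
proof (induction arbitrary: u rule: iter_face.induct)
  case self
  then show ?case by blast
next
  case (face k \<tau> i)
  obtain q where k: "k = Suc q" using face.hyps by (cases k) auto
  have "simplical_face i u \<in> standard_simplex k"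
    using face_in_simplex[of i q u] face.hyps face.prems k by simp
  then obtain v where "v \<in> standard_simplex j" "\<tau> (simplical_face i u) = \<sigma> v"
    using face.IH by blast
  then show ?case using face.prems by (auto simp: singular_face_def)
qed

lemma full_noapex:
  assumes "\<forall>u \<in> standard_simplex j. \<sigma> u \<noteq> None"
  shows "full n pv j \<sigma>"
  unfolding full_def allowable_def
proof (intro allI impI)
  fix k \<tau> assume "iter_face j \<sigma> k \<tau>"
  then have "{u \<in> standard_simplex k. \<tau> u = cone_apex} = {}"
    using iter_face_vals assms by (fastforce simp: cone_apex_def)
  then show "poly_dim_le k {u \<in> standard_simplex k. \<tau> u = cone_apex} (int k - (int n + 1) + pv)"
    using poly_dim_le_empty by metis
qed

lemma allowable_big:
  assumes "int n + 1 \<le> pv"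
  shows "allowable n pv k \<tau>"
  unfolding allowable_def
  by (rule poly_dim_le_whole) (use assms in auto)

lemma full_big:
  assumes "int n + 1 \<le> pv"
  shows "full n pv j \<sigma>"
  unfolding full_def using allowable_big[OF assms] by blast

lemma full_allowable: "full n pv j \<sigma> \<Longrightarrow> allowable n pv j \<sigma>"
  by (simp add: full_def iter_face.self)

lemma full_from_faces:
  assumes "allowable n pv (Suc j) \<omega>" "\<And>i. i \<le> Suc j \<Longrightarrow> full n pv j (singular_face (Suc j) i \<omega>)"
  shows "full n pv (Suc j) \<omega>"
  unfolding full_def
proof (intro allI impI)
  fix k \<tau> assume "iter_face (Suc j) \<omega> k \<tau>"
  from iter_face_decomp[OF this] show "allowable n pv k \<tau>"
  proof
    assume "k = Suc j \<and> \<tau> = \<omega>" then show ?thesis using assms(1) by simp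
  next
    assume "k < Suc j \<and> (\<exists>i\<le>Suc j. iter_face (Suc j - 1) (singular_face (Suc j) i \<omega>) k \<tau>)"
    then obtain i where "i \<le> Suc j" "iter_face j (singular_face (Suc j) i \<omega>) k \<tau>" by auto
    then show ?thesis using assms(2) by (auto simp: full_def)
  qed
qed

lemma allowable_neg_noapex:
  assumes "allowable n pv j \<sigma>" "int j - (int n + 1) + pv < 0" "u \<in> standard_simplex j"
  shows "\<sigma> u \<noteq> None"
  using poly_dim_le_neg[of j "{u \<in> standard_simplex j. \<sigma> u = cone_apex}"] assms
  by (auto simp: allowable_def cone_apex_def)

lemma const_full:
  assumes "y \<noteq> None \<or> int n + 1 \<le> pv"
  shows "full n pv j (const_simplex j y)"
  using assms
proof
  assume "y \<noteq> None"
  then show ?thesis by (intro full_noapex) (simp add: const_simplex_def)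
qed (rule full_big)


abbreviation "SS \<equiv> standard_simplex"
abbreviation "ST p \<equiv> subtopology (powertop_real UNIV) (standard_simplex p)"

lemma coord_cont: "continuous_map (subtopology (powertop_real UNIV) S) euclideanreal (\<lambda>u. u i)"
  by (rule continuous_map_from_subtopology) (auto intro: continuous_map_product_projection)

lemma face_restrict_comp:
  assumes "1 \<le> p" "k \<le> p"
  shows "singular_face p k (restrict (g \<circ> f) (SS p)) = restrict (g \<circ> singular_face p k f) (SS (p - 1))"
proof -
  obtain q where p: "p = Suc q" using assms by (cases p) auto
  show ?thesis using face_in_simplex[of k q] assms p
    by (auto simp: singular_face_def fun_eq_iff)
qed

lemma singular_simplex_cont:
  "singular_simplex p Y f \<Longrightarrow> continuous_map (ST p) Y f"
  by (simp add: singular_simplex_def)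

lemma noapex_sub:
  assumes "singular_simplex p (open_cone X) f" "\<forall>u\<in>SS p. f u \<noteq> None"
  shows "continuous_map (ST p) X (xc \<circ> f)"
proof -
  have c: "continuous_map (ST p) (open_cone X) f" using assms(1) by (simp add: singular_simplex_def)
  then have "f ` SS p \<subseteq> topspace (open_cone X) - {None}"
    using continuous_map_image_subset_topspace[OF c] assms(2) by auto
  then have "continuous_map (ST p) (subtopology (open_cone X) (topspace (open_cone X) - {None})) f"
    using c by (simp add: continuous_map_in_subtopology image_subset_iff_funcset)
  then show ?thesis using continuous_map_compose cont_xc by blast
qed

lemma in_gajer_noapex:
  assumes "\<sigma> \<in> gajer X n pv p" "int p - (int n + 1) + pv < 0" "u \<in> SS p"
  shows "\<sigma> u \<noteq> None"
proof -
  have "allowable n pv p \<sigma>" using assms(1) full_allowable unfolding gajer_def by blast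
  then show ?thesis using allowable_neg_noapex assms(2,3) by blast
qed

lemma cone_incl_in: "x \<in> topspace X \<Longrightarrow> cone_incl x \<in> topspace (open_cone X)"
  unfolding in_topspace_open_cone cone_incl_def
  by (intro conjI disjI2 exI[of _ x] exI[of _ "1/2"]) auto

lemma partA_inj:
  assumes neg: "int (Suc j) - (int n + 1) + pv < 0"
    and x: "x \<in> topspace X"
    and s: "\<sigma> \<in> sphere_reps (Sing X) j x" and s': "\<sigma>' \<in> sphere_reps (Sing X) j x"
    and h: "shomotopic (gajer X n pv) j (cone_incl x) (restrict (cone_incl \<circ> \<sigma>) (SS j))
              (restrict (cone_incl \<circ> \<sigma>') (SS j))"
  shows "shomotopic (Sing X) j x \<sigma> \<sigma>'"
proof -
  obtain \<omega> where w: "\<omega> \<in> gajer X n pv (Suc j)"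
    and f1: "\<forall>i<j. singular_face (Suc j) i \<omega> = const_simplex j (cone_incl x)"
    and f2: "singular_face (Suc j) j \<omega> = restrict (cone_incl \<circ> \<sigma>) (SS j)"
    and f3: "singular_face (Suc j) (Suc j) \<omega> = restrict (cone_incl \<circ> \<sigma>') (SS j)"
    using h unfolding shomotopic_def by blast
  have ws: "singular_simplex (Suc j) (open_cone X) \<omega>" using w by (simp add: gajer_def)
  have na: "\<forall>u\<in>SS (Suc j). \<omega> u \<noteq> None" using in_gajer_noapex[OF w neg] by blast
  define \<omega>' where "\<omega>' = restrict (xc \<circ> \<omega>) (SS (Suc j))"
  have "singular_simplex (Suc j) X \<omega>'"
    unfolding singular_simplex_def \<omega>'_def
    using noapex_sub[OF ws na] by (simp add: continuous_map_eq[of _ _ "xc \<circ> \<omega>"])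
  then have w'K: "\<omega>' \<in> Sing X (Suc j)" by (simp add: Sing_def)
  have fc: "singular_face (Suc j) i \<omega>' = restrict (xc \<circ> singular_face (Suc j) i \<omega>) (SS j)" if "i \<le> Suc j" for i
    using face_restrict_comp[of "Suc j" i xc \<omega>] that by (simp add: \<omega>'_def)
  have ext: "\<rho> \<in> extensional (SS j)" if "\<rho> \<in> sphere_reps (Sing X) j x" for \<rho>
    using that by (simp add: sphere_reps_def Sing_def singular_simplex_def)
  have r1: "restrict (xc \<circ> restrict (cone_incl \<circ> \<rho>) (SS j)) (SS j) = \<rho>" if "\<rho> \<in> sphere_reps (Sing X) j x" for \<rho>
    using ext[OF that] by (auto simp: fun_eq_iff cone_incl_def extensional_def)
  show ?thesis
    unfolding shomotopic_def
  proof (intro bexI[OF _ w'K] conjI allI impI)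
    fix i assume "i < j"
    then show "singular_face (Suc j) i \<omega>' = const_simplex j x"
      using fc f1 by (auto simp: const_simplex_def fun_eq_iff cone_incl_def)
  next
    show "singular_face (Suc j) j \<omega>' = \<sigma>" using fc[of j] f2 r1[OF s] by simp
    show "singular_face (Suc j) (Suc j) \<omega>' = \<sigma>'" using fc[of "Suc j"] f3 r1[OF s'] by simp
  qed
qed


definition pdeg :: "nat \<Rightarrow> (nat \<Rightarrow> real) \<Rightarrow> nat \<Rightarrow> real" where
  "pdeg j u = (\<lambda>i. if i < j then u i else if i = j then u j + u (Suc j) else 0)"

lemma simplex_sum_le:
  assumes "u \<in> SS p" "finite I" "I \<subseteq> {..p}" shows "sum u I \<le> 1"
proof -
  have "sum u I \<le> sum u {..p}"
    using assms by (intro sum_mono2) (auto simp: standard_simplex_def)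
  then show ?thesis using assms by (simp add: standard_simplex_def)
qed

lemma pdeg_in: assumes "u \<in> SS (Suc j)" shows "pdeg j u \<in> SS j"
proof -
  have u01: "\<And>i. 0 \<le> u i \<and> u i \<le> 1" and u0: "\<And>i. i > Suc j \<Longrightarrow> u i = 0"
    and us: "(\<Sum>i\<le>Suc j. u i) = 1"
    using assms by (auto simp: standard_simplex_def)
  have "u j + u (Suc j) \<le> 1" using simplex_sum_le[OF assms, of "{j, Suc j}"] by simp
  moreover have "(\<Sum>i\<le>j. pdeg j u i) = (\<Sum>i<j. u i) + (u j + u (Suc j))"
    by (simp add: pdeg_def lessThan_Suc_atMost[symmetric])
  moreover have "(\<Sum>i\<le>Suc j. u i) = (\<Sum>i<j. u i) + (u j + u (Suc j))"
    by (simp add: lessThan_Suc_atMost[symmetric])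
  ultimately show ?thesis using u01 us by (auto simp: standard_simplex_def pdeg_def add_nonneg_nonneg)
qed

lemma pdeg_cont: "continuous_map (ST (Suc j)) (ST j) (pdeg j)"
proof -
  have "continuous_map (ST (Suc j)) euclideanreal (\<lambda>u. pdeg j u i)" for i
    unfolding pdeg_def by (auto intro!: continuous_intros coord_cont)
  then show ?thesis using pdeg_in
    by (auto simp: continuous_map_in_subtopology continuous_map_componentwise)
qed

lemma pdeg_face_Suc: "v \<in> SS j \<Longrightarrow> pdeg j (simplical_face (Suc j) v) = v"
  by (auto simp: pdeg_def simplical_face_def standard_simplex_def fun_eq_iff)

lemma pdeg_face_j: "v \<in> SS j \<Longrightarrow> pdeg j (simplical_face j v) = v"
  by (auto simp: pdeg_def simplical_face_def standard_simplex_def fun_eq_iff)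

lemma pdeg_face_lt: "i < j \<Longrightarrow> pdeg j (simplical_face i v) i = 0"
  by (auto simp: pdeg_def simplical_face_def)

lemma partA_surj:
  assumes X: "compact_space X" and neg: "int (Suc j) - (int n + 1) + pv < 0"
    and x: "x \<in> topspace X"
    and t: "\<tau> \<in> sphere_reps (gajer X n pv) j (cone_incl x)"
  shows "\<exists>\<sigma> \<in> sphere_reps (Sing X) j x.
           shomotopic (gajer X n pv) j (cone_incl x) (restrict (cone_incl \<circ> \<sigma>) (SS j)) \<tau>"
proof -
  have tG: "\<tau> \<in> gajer X n pv j" using t by (simp add: sphere_reps_def)
  have ts: "singular_simplex j (open_cone X) \<tau>" using tG by (simp add: gajer_def)
  have na: "\<forall>u\<in>SS j. \<tau> u \<noteq> None" using in_gajer_noapex[OF tG] neg by auto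
  have tv: "\<exists>a s. \<tau> u = Some (a,s) \<and> a \<in> topspace X \<and> 0 < s \<and> s < 1" if "u \<in> SS j" for u
  proof -
    have "\<tau> u \<in> topspace (open_cone X)"
      using ts that by (auto simp: singular_simplex_def continuous_map_def)
    then show ?thesis using na that by (auto simp: in_topspace_open_cone)
  qed
  have bd: "\<tau> v = cone_incl x" if "v \<in> SS j" "k \<le> j" "v k = 0" for v k
    using sphere_bdry[OF t that] .
  define \<sigma> where "\<sigma> = restrict (xc \<circ> \<tau>) (SS j)"
  have sS: "singular_simplex j X \<sigma>"
    unfolding singular_simplex_def \<sigma>_def
    using noapex_sub[OF ts na] by (simp add: continuous_map_eq[of _ _ "xc \<circ> \<tau>"])
  have sR: "\<sigma> \<in> sphere_reps (Sing X) j x"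
    unfolding sphere_reps_def Sing_def
  proof (intro CollectI conjI impI allI sS)
    fix i assume "0 < j" "i \<le> j"
    then have "singular_face j i \<sigma> = restrict (xc \<circ> singular_face j i \<tau>) (SS (j - 1))"
      using face_restrict_comp[of j i xc \<tau>] by (simp add: \<sigma>_def)
    moreover have "singular_face j i \<tau> = const_simplex (j - 1) (cone_incl x)"
      using t \<open>0 < j\<close> \<open>i \<le> j\<close> by (simp add: sphere_reps_def)
    ultimately show "singular_face j i \<sigma> = const_simplex (j - 1) x"
      by (auto simp: const_simplex_def cone_incl_def fun_eq_iff)
  qed
  define \<psi> where "\<psi> u = (if u j + u (Suc j) = 0 then 0 else u j / (u j + u (Suc j)))" for u :: "nat \<Rightarrow> real"
  define T where "T u = tc (\<tau> (pdeg j u))" for u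
  define A where "A u = xc (\<tau> (pdeg j u))" for u
  define \<omega> where "\<omega> = restrict (\<lambda>u. Some (A u, 1/2 + (T u - 1/2) * \<psi> u)) (SS (Suc j))"
  have nn: "0 \<le> u i" if "u \<in> SS p" for u p i using that by (simp add: standard_simplex_def)
  have psi01: "0 \<le> \<psi> u \<and> \<psi> u \<le> 1" if "u \<in> SS (Suc j)" for u
    using nn[OF that, of j] nn[OF that, of "Suc j"] by (auto simp: \<psi>_def divide_simps)
  have Tv: "\<exists>a. \<tau> (pdeg j u) = Some (A u, T u) \<and> A u \<in> topspace X \<and> 0 < T u \<and> T u < 1"
    if "u \<in> SS (Suc j)" for u
    using tv[OF pdeg_in[OF that]] by (auto simp: A_def T_def)
  have zero: "T u = 1/2 \<and> A u = x" if "u \<in> SS (Suc j)" "u j + u (Suc j) = 0" for u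
  proof -
    have "pdeg j u j = 0" using that by (simp add: pdeg_def)
    then have "\<tau> (pdeg j u) = cone_incl x" using bd[OF pdeg_in[OF that(1)], of j] by simp
    then show ?thesis by (simp add: T_def A_def cone_incl_def)
  qed
  have Tc: "continuous_map (ST (Suc j)) euclideanreal T"
  proof -
    have "continuous_map (ST (Suc j)) euclideanreal (tc \<circ> \<tau> \<circ> pdeg j)"
      using pdeg_cont singular_simplex_cont[OF ts] cont_tc
      by (meson continuous_map_compose)
    then show ?thesis by (rule continuous_map_eq) (simp add: T_def)
  qed
  have Ac: "continuous_map (ST (Suc j)) X A"
  proof -
    have "continuous_map (ST (Suc j)) X ((xc \<circ> \<tau>) \<circ> pdeg j)"
      using pdeg_cont noapex_sub[OF ts na] by (meson continuous_map_compose)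
    then show ?thesis by (rule continuous_map_eq) (simp add: A_def)
  qed
  define g where "g u = \<bar>T u - 1/2\<bar>" for u
  have gc: "continuous_map (ST (Suc j)) euclideanreal g"
    unfolding g_def by (intro continuous_intros Tc)
  have hc: "continuous_map (ST (Suc j)) euclideanreal (\<lambda>u. (T u - 1/2) * \<psi> u)"
  proof (rule cont_squeeze[OF gc])
    let ?S = "{z \<in> topspace (ST (Suc j)). 0 < g z}"
    have den: "u j + u (Suc j) \<noteq> 0" if "u \<in> topspace (subtopology (ST (Suc j)) ?S)" for u
      using that zero by (auto simp: g_def)
    have "continuous_map (subtopology (ST (Suc j)) ?S) euclideanreal (\<lambda>u. (T u - 1/2) * (u j / (u j + u (Suc j))))"
      using den by (intro continuous_intros continuous_map_from_subtopology[OF Tc]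
          continuous_map_from_subtopology[OF coord_cont]) auto
    then show "continuous_map (subtopology (ST (Suc j)) ?S) euclideanreal (\<lambda>u. (T u - 1/2) * \<psi> u)"
      by (rule continuous_map_eq) (use den in \<open>auto simp: \<psi>_def\<close>)
  next
    fix u assume "u \<in> topspace (ST (Suc j))"
    then show "\<bar>(T u - 1/2) * \<psi> u\<bar> \<le> g u"
      using psi01 by (auto simp: g_def abs_mult intro: mult_left_le)
  qed
  have wS: "singular_simplex (Suc j) (open_cone X) \<omega>"
    unfolding singular_simplex_def
  proof
    show "continuous_map (ST (Suc j)) (open_cone X) \<omega>"
    proof (rule cone_cont[OF X])
      show "\<omega> \<in> topspace (ST (Suc j)) \<rightarrow> topspace (open_cone X)"
      proof
        fix u assume u: "u \<in> topspace (ST (Suc j))"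
        then have u': "u \<in> SS (Suc j)" by simp
        have "A u \<in> topspace X" "0 < T u" "T u < 1" using Tv[OF u'] by auto
        moreover have "0 \<le> \<psi> u" "\<psi> u \<le> 1" using psi01[OF u'] by auto
        ultimately have "\<bar>(T u - 1/2) * \<psi> u\<bar> \<le> \<bar>T u - 1/2\<bar>"
          by (auto simp: abs_mult intro: mult_left_le)
        moreover have "\<bar>T u - 1/2\<bar> < 1/2" using \<open>0 < T u\<close> \<open>T u < 1\<close> by (simp only: abs_less_iff) linarith
        ultimately have "0 < 1/2 + (T u - 1/2) * \<psi> u \<and> 1/2 + (T u - 1/2) * \<psi> u < 1"
          by linarith
        then show "\<omega> u \<in> topspace (open_cone X)"
          using u' \<open>A u \<in> topspace X\<close> by (auto simp: \<omega>_def in_topspace_open_cone)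
      qed
      show "continuous_map (ST (Suc j)) euclideanreal (tc \<circ> \<omega>)"
        by (rule continuous_map_eq[of _ _ "\<lambda>u. 1/2 + (T u - 1/2) * \<psi> u"])
           (auto simp: \<omega>_def intro!: continuous_intros hc)
      show "continuous_map (subtopology (ST (Suc j)) {z \<in> topspace (ST (Suc j)). \<omega> z \<noteq> None}) X (xc \<circ> \<omega>)"
        by (rule continuous_map_eq[of _ _ A]) (auto simp: \<omega>_def intro: continuous_map_from_subtopology[OF Ac])
    qed
    show "\<omega> \<in> extensional (SS (Suc j))" by (simp add: \<omega>_def)
  qed
  have wG: "\<omega> \<in> gajer X n pv (Suc j)"
    unfolding gajer_def using wS by (auto intro!: full_noapex simp: \<omega>_def)
  have fw: "singular_face (Suc j) i \<omega> = restrict (\<lambda>v. \<omega> (simplical_face i v)) (SS j)" for i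
    by (simp add: singular_face_def o_def)
  show ?thesis
  proof (intro bexI[OF _ sR], unfold shomotopic_def, intro bexI[OF _ wG] conjI allI impI)
    fix i assume i: "i < j"
    show "singular_face (Suc j) i \<omega> = const_simplex j (cone_incl x)"
      unfolding fw const_simplex_def
    proof (rule restrict_ext)
      fix v assume v: "v \<in> SS j"
      have u: "simplical_face i v \<in> SS (Suc j)" using face_in_simplex[of i j v] i v by simp
      have "\<tau> (pdeg j (simplical_face i v)) = cone_incl x"
        using bd[OF pdeg_in[OF u], of i] i pdeg_face_lt[OF i] by simp
      then show "\<omega> (simplical_face i v) = cone_incl x"
        using u by (simp add: \<omega>_def A_def T_def cone_incl_def)
    qed
  next
    show "singular_face (Suc j) j \<omega> = restrict (cone_incl \<circ> \<sigma>) (SS j)"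
      unfolding fw
    proof (rule restrict_ext)
      fix v assume v: "v \<in> SS j"
      have u: "simplical_face j v \<in> SS (Suc j)" using face_in_simplex[of j j v] v by simp
      have "\<psi> (simplical_face j v) = 0" by (simp add: \<psi>_def simplical_face_def)
      then show "\<omega> (simplical_face j v) = (cone_incl \<circ> \<sigma>) v"
        using u v pdeg_face_j[OF v] by (simp add: \<omega>_def A_def \<sigma>_def cone_incl_def)
    qed
  next
    show "singular_face (Suc j) (Suc j) \<omega> = \<tau>"
    proof -
      have ext: "\<tau> \<in> extensional (SS j)" using ts by (simp add: singular_simplex_def)
      have "restrict (\<lambda>v. \<omega> (simplical_face (Suc j) v)) (SS j) = restrict \<tau> (SS j)"
      proof (rule restrict_ext)
        fix v assume v: "v \<in> SS j"
        have u: "simplical_face (Suc j) v \<in> SS (Suc j)" using face_in_simplex[of "Suc j" j v] v by simp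
        have pv: "pdeg j (simplical_face (Suc j) v) = v" using pdeg_face_Suc[OF v] .
        show "\<omega> (simplical_face (Suc j) v) = \<tau> v"
        proof (cases "v j = 0")
          case True
          then have "\<psi> (simplical_face (Suc j) v) = 0" by (simp add: \<psi>_def simplical_face_def)
          moreover have "\<tau> v = cone_incl x" using bd[OF v, of j] True by simp
          ultimately show ?thesis using u pv by (simp add: \<omega>_def A_def T_def cone_incl_def)
        next
          case False
          then have "\<psi> (simplical_face (Suc j) v) = 1" by (simp add: \<psi>_def simplical_face_def)
          moreover obtain a s where "\<tau> v = Some (a,s)" using tv[OF v] by blast
          ultimately show ?thesis using u pv by (simp add: \<omega>_def A_def T_def)
        qed
      qed
      then show ?thesis using ext unfolding fw by (simp add: extensional_restrict)
    qed
  qed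
qed


fun mn :: "nat \<Rightarrow> (nat \<Rightarrow> real) \<Rightarrow> real" where
  "mn 0 u = u 0"
| "mn (Suc k) u = min (mn k u) (u (Suc k))"

lemma mn_le: "i \<le> k \<Longrightarrow> mn k u \<le> u i"
proof (induction k)
  case 0 then show ?case by simp
next
  case (Suc k) then show ?case by (cases "i = Suc k") (auto simp: min.coboundedI1)
qed

lemma mn_att: "\<exists>i\<le>k. mn k u = u i"
proof (induction k)
  case 0 then show ?case by simp
next
  case (Suc k)
  then obtain i where "i \<le> k" "mn k u = u i" by blast
  then show ?case by (cases "mn k u \<le> u (Suc k)") (auto simp: min_def intro: exI[of _ i] exI[of _ "Suc k"])
qed

lemma mn_cont: "continuous_map (subtopology (powertop_real UNIV) S) euclideanreal (mn k)"
proof (induction k)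
  case 0 then show ?case using coord_cont[of S 0] by (simp add: o_def)
next
  case (Suc k)
  have "continuous_map (subtopology (powertop_real UNIV) S) euclideanreal (\<lambda>u. min (mn k u) (u (Suc k)))"
    using Suc coord_cont by (intro continuous_intros) auto
  then show ?case by simp
qed

definition rad :: "nat \<Rightarrow> (nat \<Rightarrow> real) \<Rightarrow> real" where
  "rad N u = 1 - real (Suc N) * mn N u"

definition wp :: "nat \<Rightarrow> (nat \<Rightarrow> real) \<Rightarrow> nat \<Rightarrow> real" where
  "wp N u = (\<lambda>i. if i \<le> N then (u i - mn N u) / rad N u else 0)"

definition bdry :: "nat \<Rightarrow> (nat \<Rightarrow> real) set" where
  "bdry N = {w \<in> SS N. \<exists>i\<le>N. w i = 0}"

lemma mn_nonneg: "u \<in> SS N \<Longrightarrow> 0 \<le> mn N u"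
  using mn_att[of N u] by (auto simp: standard_simplex_def)

lemma sum_ge_mn: "u \<in> SS N \<Longrightarrow> real (Suc N) * mn N u \<le> 1"
proof -
  assume u: "u \<in> SS N"
  have "(\<Sum>i\<le>N. mn N u) \<le> (\<Sum>i\<le>N. u i)" by (intro sum_mono mn_le) auto
  then show ?thesis using u by (simp add: standard_simplex_def)
qed

lemma rad_range: "u \<in> SS N \<Longrightarrow> 0 \<le> rad N u \<and> rad N u \<le> 1"
  using sum_ge_mn[of u N] mn_nonneg[of u N] by (simp add: rad_def)

lemma rad_zero: assumes u: "u \<in> SS N" "rad N u = 0" shows "u = bary N"
proof
  fix i
  show "u i = bary N i"
  proof (cases "i \<le> N")
    case False then show ?thesis using u by (simp add: standard_simplex_def bary_def)
  next
    case True
    have m: "mn N u = 1 / real (Suc N)" using u(2) by (simp add: rad_def field_simps)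
    have ge: "\<And>l. l \<le> N \<Longrightarrow> mn N u \<le> u l" by (rule mn_le)
    have "(\<Sum>l\<le>N. u l - mn N u) = (\<Sum>l\<le>N. u l) - real (Suc N) * mn N u"
      by (simp add: sum_subtractf)
    also have "\<dots> = 0" using u m by (simp add: standard_simplex_def)
    finally have "(\<Sum>l\<le>N. u l - mn N u) = 0" .
    then have "\<forall>l\<in>{..N}. u l - mn N u = 0"
      using sum_nonneg_eq_0_iff[of "{..N}" "\<lambda>l. u l - mn N u"] ge by auto
    then have "u i = mn N u" using True by auto
    then show ?thesis using True m by (simp add: bary_def)
  qed
qed

lemma rad_bdry: assumes "w \<in> bdry N" shows "mn N w = 0" "rad N w = 1" "wp N w = w"
proof -
  obtain i where i: "i \<le> N" "w i = 0" "w \<in> SS N" using assms by (auto simp: bdry_def)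
  show m: "mn N w = 0" using mn_le[OF i(1), of w] mn_nonneg[OF i(3)] i by simp
  then show r: "rad N w = 1" by (simp add: rad_def)
  show "wp N w = w" using i(3) m r by (auto simp: wp_def fun_eq_iff standard_simplex_def)
qed

lemma wp_in: assumes u: "u \<in> SS N" and r: "rad N u > 0" shows "wp N u \<in> bdry N"
proof -
  have ge: "\<And>l. l \<le> N \<Longrightarrow> mn N u \<le> u l" by (rule mn_le)
  obtain i where i: "i \<le> N" "mn N u = u i" using mn_att by blast
  have "(\<Sum>l\<le>N. wp N u l) = (\<Sum>l\<le>N. (u l - mn N u) / rad N u)" by (simp add: wp_def)
  also have "\<dots> = ((\<Sum>l\<le>N. u l) - real (Suc N) * mn N u) / rad N u"
    by (simp add: sum_divide_distrib[symmetric] sum_subtractf)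
  also have "\<dots> = 1" using u r by (simp add: standard_simplex_def rad_def)
  finally have s: "(\<Sum>l\<le>N. wp N u l) = 1" .
  have nn: "0 \<le> wp N u l" for l using ge r by (simp add: wp_def)
  have le1: "wp N u l \<le> 1" for l
  proof (cases "l \<le> N")
    case True
    have "wp N u l \<le> (\<Sum>l\<le>N. wp N u l)"
      using True nn by (intro member_le_sum) auto
    then show ?thesis using s by simp
  qed (simp add: wp_def)
  have "wp N u \<in> SS N" using s nn le1 by (simp add: standard_simplex_def wp_def)
  moreover have "wp N u i = 0" using i by (simp add: wp_def)
  ultimately show ?thesis using i by (auto simp: bdry_def)
qed

lemma wp_decomp:
  assumes u: "u \<in> SS N" and r: "rad N u > 0"
  shows "u = (\<lambda>i. (1 - rad N u) * bary N i + rad N u * wp N u i)"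
proof
  fix i
  show "u i = (1 - rad N u) * bary N i + rad N u * wp N u i"
  proof (cases "i \<le> N")
    case True
    have "(1 - rad N u) * bary N i = mn N u"
      using True by (simp add: rad_def bary_def field_simps)
    then show ?thesis using True r by (simp add: wp_def)
  next
    case False then show ?thesis using u by (simp add: standard_simplex_def bary_def wp_def)
  qed
qed

lemma rad_cont: "continuous_map (subtopology (powertop_real UNIV) S) euclideanreal (rad N)"
  unfolding rad_def[abs_def] by (intro continuous_intros mn_cont)

lemma wp_cont:
  "continuous_map (subtopology (ST N) {u \<in> SS N. rad N u > 0})
     (subtopology (powertop_real UNIV) (bdry N)) (wp N)"
proof -
  have "continuous_map (subtopology (ST N) {u \<in> SS N. rad N u > 0}) euclideanreal (\<lambda>u. wp N u i)" for i
  proof (cases "i \<le> N")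
    case True
    have "continuous_map (subtopology (ST N) {u \<in> SS N. rad N u > 0}) euclideanreal (\<lambda>u. (u i - mn N u) / rad N u)"
      unfolding subtopology_subtopology
      by (intro continuous_intros coord_cont mn_cont rad_cont) auto
    then show ?thesis using True by (simp add: wp_def)
  qed (simp add: wp_def)
  moreover have "wp N u \<in> bdry N" if "u \<in> SS N" "rad N u > 0" for u using wp_in that by blast
  ultimately show ?thesis
    by (auto simp: continuous_map_in_subtopology continuous_map_componentwise)
qed


definition bf :: "nat \<Rightarrow> ((nat \<Rightarrow> real) \<Rightarrow> 'b) \<Rightarrow> ((nat \<Rightarrow> real) \<Rightarrow> 'b) \<Rightarrow> 'b \<Rightarrow> (nat \<Rightarrow> real) \<Rightarrow> 'b" where
  "bf j \<sigma> \<tau> y w = (if w (Suc j) = 0 then \<tau> (del (Suc j) w) else if w j = 0 then \<sigma> (del j w) else y)"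

definition scale :: "real \<Rightarrow> ('a \<times> real) option \<Rightarrow> ('a \<times> real) option" where
  "scale r z = (case z of None \<Rightarrow> None | Some p \<Rightarrow> Some (fst p, r * snd p))"

lemma scale_1 [simp]: "scale 1 z = z"
  by (cases z) (auto simp: scale_def)
lemma scale_None [simp]: "scale r z = None \<longleftrightarrow> z = None"
  by (cases z) (auto simp: scale_def)
lemma tc_scale [simp]: "tc (scale r z) = r * tc z"
  by (cases z) (auto simp: scale_def tc_def)
lemma xc_scale [simp]: "z \<noteq> None \<Longrightarrow> xc (scale r z) = xc z"
  by (cases z) (auto simp: scale_def xc_def)

lemma bf_B1: "w (Suc j) = 0 \<Longrightarrow> bf j \<sigma> \<tau> y w = \<tau> (del (Suc j) w)"
  by (simp add: bf_def)

lemma bf_B2: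
  assumes w: "w \<in> SS (Suc j)" "w j = 0"
    and sb: "\<And>v k. v \<in> SS j \<Longrightarrow> k \<le> j \<Longrightarrow> v k = 0 \<Longrightarrow> \<sigma> v = y"
    and tb: "\<And>v k. v \<in> SS j \<Longrightarrow> k \<le> j \<Longrightarrow> v k = 0 \<Longrightarrow> \<tau> v = y"
  shows "bf j \<sigma> \<tau> y w = \<sigma> (del j w)"
proof (cases "w (Suc j) = 0")
  case True
  have "\<tau> (del (Suc j) w) = y"
    using tb[OF del_in_simplex[OF w(1) le_refl True], of j] w(2) by (simp add: del_def)
  moreover have "\<sigma> (del j w) = y"
    using sb[OF del_in_simplex[OF w(1) _ w(2)], of j] True by (simp add: del_def)
  ultimately show ?thesis using True by (simp add: bf_def)
qed (use w in \<open>simp add: bf_def\<close>)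

lemma bf_B3:
  assumes w: "w \<in> SS (Suc j)" "i < j" "w i = 0"
    and sb: "\<And>v k. v \<in> SS j \<Longrightarrow> k \<le> j \<Longrightarrow> v k = 0 \<Longrightarrow> \<sigma> v = y"
    and tb: "\<And>v k. v \<in> SS j \<Longrightarrow> k \<le> j \<Longrightarrow> v k = 0 \<Longrightarrow> \<tau> v = y"
  shows "bf j \<sigma> \<tau> y w = y"
proof (cases "w (Suc j) = 0")
  case True
  then show ?thesis
    using tb[OF del_in_simplex[OF w(1) le_refl True], of i] w by (simp add: del_def bf_def)
next
  case False
  show ?thesis
  proof (cases "w j = 0")
    case True
    then show ?thesis using False
      sb[OF del_in_simplex[OF w(1) _ True], of i] w by (simp add: del_def bf_def)
  qed (use False in \<open>simp add: bf_def\<close>)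
qed

lemma closedin_coord0:
  "closedin (subtopology (powertop_real UNIV) S) {w \<in> S. w i = 0}"
proof -
  have "closedin (subtopology (powertop_real UNIV) S)
          {w \<in> topspace (subtopology (powertop_real UNIV) S). w i \<in> {0}}"
    by (rule closedin_continuous_map_preimage[OF coord_cont]) auto
  then show ?thesis by simp
qed

lemma bf_cont:
  assumes sS: "singular_simplex j (open_cone X) \<sigma>" and tS: "singular_simplex j (open_cone X) \<tau>"
    and yT: "y \<in> topspace (open_cone X)"
    and sb: "\<And>v k. v \<in> SS j \<Longrightarrow> k \<le> j \<Longrightarrow> v k = 0 \<Longrightarrow> \<sigma> v = y"
    and tb: "\<And>v k. v \<in> SS j \<Longrightarrow> k \<le> j \<Longrightarrow> v k = 0 \<Longrightarrow> \<tau> v = y"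
  shows "continuous_map (subtopology (powertop_real UNIV) (bdry (Suc j))) (open_cone X) (bf j \<sigma> \<tau> y)"
proof -
  let ?Z = "subtopology (powertop_real UNIV) (bdry (Suc j))"
  define T where "T k = (if k = (0::nat) then {w \<in> bdry (Suc j). w (Suc j) = 0}
      else if k = 1 then {w \<in> bdry (Suc j). w j = 0} else (\<Union>i<j. {w \<in> bdry (Suc j). w i = 0}))" for k
  define f where "f k = (if k = (0::nat) then \<tau> \<circ> del (Suc j) else if k = 1 then \<sigma> \<circ> del j else (\<lambda>_. y))" for k
  have bS: "bdry (Suc j) \<subseteq> SS (Suc j)" by (auto simp: bdry_def)
  have eq: "bf j \<sigma> \<tau> y w = f k w" if kk: "k \<in> {0,1,2}" and wT: "w \<in> T k" for k w
  proof -
    have w: "w \<in> SS (Suc j)" using that bS by (auto simp: T_def)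
    show ?thesis
    proof (cases "k = 0")
      case True then show ?thesis using that by (simp add: T_def f_def bf_B1)
    next
      case False
      show ?thesis
      proof (cases "k = 1")
        case True then show ?thesis using that w bf_B2[OF w _ sb tb] by (simp add: T_def f_def)
      next
        case k2: False
        then obtain i where "i < j" "w i = 0" using kk wT False by (auto simp: T_def)
        then show ?thesis using k2 False bf_B3[OF w _ _ sb tb] by (simp add: f_def)
      qed
    qed
  qed
  show ?thesis
  proof (rule pasting_lemma_closed[where I = "{0,1,2}" and T = T and f = f])
    show "finite {0::nat,1,2}" by simp
  next
    fix k :: nat assume k: "k \<in> {0,1,2}"
    show "closedin ?Z (T k)"
    proof -
      have "closedin ?Z {w \<in> bdry (Suc j). w i = 0}" for i by (rule closedin_coord0)
      moreover have "closedin ?Z (\<Union>i<j. {w \<in> bdry (Suc j). w i = 0})"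
        using calculation by (intro closedin_Union) auto
      ultimately show ?thesis by (simp add: T_def)
    qed
    show "continuous_map (subtopology ?Z (T k)) (open_cone X) (f k)"
    proof -
      have Tk: "T k \<subseteq> bdry (Suc j)" by (auto simp: T_def)
      have sub: "subtopology ?Z (T k) = subtopology (powertop_real UNIV) (T k)"
        by (simp add: subtopology_subtopology Int_absorb1[OF Tk])
      have "continuous_map (subtopology (powertop_real UNIV) (T 0)) (open_cone X) (\<tau> \<circ> del (Suc j))"
        using cont_del[of "Suc j" j "T 0"] singular_simplex_cont[OF tS] bS
        by (auto simp: T_def intro: continuous_map_compose)
      moreover have "continuous_map (subtopology (powertop_real UNIV) (T 1)) (open_cone X) (\<sigma> \<circ> del j)"
        using cont_del[of j j "T 1"] singular_simplex_cont[OF sS] bS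
        by (auto simp: T_def intro: continuous_map_compose)
      moreover have "continuous_map (subtopology (powertop_real UNIV) (T 2)) (open_cone X) (\<lambda>_. y)"
        using yT by simp
      ultimately show ?thesis using k sub by (auto simp: f_def)
    qed
  next
    fix k l w assume kl: "k \<in> {0::nat,1,2}" "l \<in> {0::nat,1,2}" and w: "w \<in> topspace ?Z \<inter> T k \<inter> T l"
    have "bf j \<sigma> \<tau> y w = f k w" using eq[OF kl(1)] w by blast
    moreover have "bf j \<sigma> \<tau> y w = f l w" using eq[OF kl(2)] w by blast
    ultimately show "f k w = f l w" by simp
  next
    fix w assume w: "w \<in> topspace ?Z"
    then obtain i where i: "i \<le> Suc j" "w i = 0" by (auto simp: bdry_def)
    show "\<exists>k. k \<in> {0,1,2} \<and> w \<in> T k \<and> bf j \<sigma> \<tau> y w = f k w"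
    proof (cases "i = Suc j")
      case True then show ?thesis using w i eq[of 0 w] by (auto simp: T_def)
    next
      case False
      show ?thesis
      proof (cases "i = j")
        case True then show ?thesis using w i eq[of 1 w] by (auto simp: T_def)
      next
        case False
        then have "i < j" using i \<open>i \<noteq> Suc j\<close> by simp
        then have "w \<in> T 2" using w i by (auto simp: T_def)
        then show ?thesis using eq[of 2 w] by auto
      qed
    qed
  qed
qed


lemma const0_val: "const_simplex 0 y (ebasis 0) = y"
  by (simp add: const_simplex_def standard_simplex_0 ebasis_def)

lemma ebasis0_in: "ebasis 0 \<in> SS 0"
  by (simp add: standard_simplex_0 ebasis_def)

lemma xc_scale': "xc (scale r z) = xc z"
  by (cases z) (auto simp: scale_def xc_def)

lemma partB:
  assumes X: "compact_space X" and jm: "0 \<le> int j - int n + pv"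
    and y0: "const_simplex 0 y \<in> gajer X n pv 0"
    and s: "\<sigma> \<in> sphere_reps (gajer X n pv) j y" and t: "\<tau> \<in> sphere_reps (gajer X n pv) j y"
  shows "shomotopic (gajer X n pv) j y \<sigma> \<tau>"
proof -
  let ?N = "Suc j"
  have y0S: "singular_simplex 0 (open_cone X) (const_simplex 0 y)" using y0 by (simp add: gajer_def)
  have yT: "y \<in> topspace (open_cone X)"
    using continuous_map_image_subset_topspace[OF singular_simplex_cont[OF y0S]] ebasis0_in const0_val
    by (metis image_subset_iff topspace_standard_simplex)
  have sG: "\<sigma> \<in> gajer X n pv j" and tG: "\<tau> \<in> gajer X n pv j" using s t by (auto simp: sphere_reps_def)
  have sS: "singular_simplex j (open_cone X) \<sigma>" and tS: "singular_simplex j (open_cone X) \<tau>"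
    using sG tG by (auto simp: gajer_def)
  have sb: "\<And>v k. v \<in> SS j \<Longrightarrow> k \<le> j \<Longrightarrow> v k = 0 \<Longrightarrow> \<sigma> v = y" using sphere_bdry[OF s] by blast
  have tb: "\<And>v k. v \<in> SS j \<Longrightarrow> k \<le> j \<Longrightarrow> v k = 0 \<Longrightarrow> \<tau> v = y" using sphere_bdry[OF t] by blast
  define B where "B = bf j \<sigma> \<tau> y"
  have Bc: "continuous_map (subtopology (powertop_real UNIV) (bdry ?N)) (open_cone X) B"
    unfolding B_def by (rule bf_cont[OF sS tS yT sb tb])
  have BT: "B w \<in> topspace (open_cone X)" if "w \<in> bdry ?N" for w
    using continuous_map_image_subset_topspace[OF Bc] that by auto
  define \<omega> where "\<omega> = restrict (\<lambda>u. if rad ?N u = 0 then None else scale (rad ?N u) (B (wp ?N u))) (SS ?N)"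
  have nX: "topspace X \<noteq> {}" using yT by (auto simp: in_topspace_open_cone)
  have face_bdry: "simplical_face i v \<in> bdry ?N" if "i \<le> ?N" "v \<in> SS j" for i v
    using face_in_simplex[OF that] that by (auto simp: bdry_def simplical_face_def)
  have wface: "\<omega> (simplical_face i v) = B (simplical_face i v)" if "i \<le> ?N" "v \<in> SS j" for i v
    using face_bdry[OF that] rad_bdry[OF face_bdry[OF that]] by (simp add: \<omega>_def bdry_def)
  let ?R = "{u \<in> SS ?N. rad ?N u > 0}"
  have BWc: "continuous_map (subtopology (ST ?N) ?R) (open_cone X) (B \<circ> wp ?N)"
    using wp_cont Bc continuous_map_compose by blast
  have wS: "singular_simplex ?N (open_cone X) \<omega>"
    unfolding singular_simplex_def
  proof
    show "continuous_map (ST ?N) (open_cone X) \<omega>"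
    proof (rule cone_cont[OF X])
      show "\<omega> \<in> topspace (ST ?N) \<rightarrow> topspace (open_cone X)"
      proof
        fix u assume "u \<in> topspace (ST ?N)"
        then have u: "u \<in> SS ?N" by simp
        show "\<omega> u \<in> topspace (open_cone X)"
        proof (cases "rad ?N u = 0")
          case True then show ?thesis using u nX by (simp add: \<omega>_def in_topspace_open_cone)
        next
          case False
          then have r: "0 < rad ?N u" "rad ?N u \<le> 1" using rad_range[OF u] by auto
          have "B (wp ?N u) \<in> topspace (open_cone X)" using BT wp_in[OF u r(1)] by blast
          moreover have key: "0 < rad ?N u * t \<and> rad ?N u * t < 1" if "0 < t" "t < 1" for t
          proof -
            have a: "rad ?N u * t \<le> t" using r that mult_left_le_one_le[of t "rad ?N u"] by simp
            have b: "0 < rad ?N u * t" using r that by (simp add: mult_pos_pos)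
            from a b that show ?thesis by linarith
          qed
          ultimately have "scale (rad ?N u) (B (wp ?N u)) \<in> topspace (open_cone X)"
            by (auto simp: in_topspace_open_cone scale_def)
          then show ?thesis using u False by (simp add: \<omega>_def)
        qed
      qed
      show "continuous_map (ST ?N) euclideanreal (tc \<circ> \<omega>)"
      proof (rule cont_squeeze[OF rad_cont[of "SS ?N" ?N]])
        have eqS: "{z \<in> topspace (ST ?N). 0 < rad ?N z} = ?R" by simp
        have "continuous_map (subtopology (ST ?N) ?R) euclideanreal (\<lambda>u. rad ?N u * tc (B (wp ?N u)))"
        proof (intro continuous_intros)
          show "continuous_map (subtopology (ST ?N) ?R) euclideanreal (rad ?N)"
            unfolding subtopology_subtopology by (rule rad_cont)
          show "continuous_map (subtopology (ST ?N) ?R) euclideanreal (\<lambda>u. tc (B (wp ?N u)))"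
            using continuous_map_compose[OF BWc cont_tc] by (simp add: o_def)
        qed
        then show "continuous_map (subtopology (ST ?N) {z \<in> topspace (ST ?N). 0 < rad ?N z}) euclideanreal (tc \<circ> \<omega>)"
          unfolding eqS by (rule continuous_map_eq) (auto simp: \<omega>_def)
      next
        fix u assume "u \<in> topspace (ST ?N)"
        then have u: "u \<in> SS ?N" by simp
        show "\<bar>(tc \<circ> \<omega>) u\<bar> \<le> rad ?N u"
        proof (cases "rad ?N u = 0")
          case True then show ?thesis using u by (simp add: \<omega>_def)
        next
          case False
          then have r: "0 < rad ?N u" using rad_range[OF u] by auto
          have "B (wp ?N u) \<in> topspace (open_cone X)" using BT wp_in[OF u r] by blast
          then have "0 \<le> tc (B (wp ?N u)) \<and> tc (B (wp ?N u)) \<le> 1"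
            by (auto simp: in_topspace_open_cone)
          then show ?thesis using u False r by (simp add: \<omega>_def abs_mult mult_left_le)
        qed
      qed
      show "continuous_map (subtopology (ST ?N) {z \<in> topspace (ST ?N). \<omega> z \<noteq> None}) X (xc \<circ> \<omega>)"
      proof -
        let ?Q = "{z \<in> topspace (ST ?N). \<omega> z \<noteq> None}"
        have QR: "?Q \<subseteq> ?R"
        proof
          fix z assume "z \<in> ?Q"
          then have "z \<in> SS ?N" "rad ?N z \<noteq> 0" by (auto simp: \<omega>_def)
          then show "z \<in> ?R" using rad_range[of z ?N] by auto
        qed
        have c1: "continuous_map (subtopology (ST ?N) ?Q) (open_cone X) (B \<circ> wp ?N)"
        proof -
          have eq: "subtopology (ST ?N) ?Q = subtopology (subtopology (ST ?N) ?R) ?Q"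
            using QR by (simp add: subtopology_subtopology Int_absorb1)
          show ?thesis unfolding eq by (rule continuous_map_from_subtopology[OF BWc])
        qed
        have nn: "(B \<circ> wp ?N) z \<noteq> None" if "z \<in> ?Q" for z
        proof -
          have z: "z \<in> SS ?N" "rad ?N z \<noteq> 0" "\<omega> z \<noteq> None" using that by (auto simp: \<omega>_def)
          then have "\<omega> z = scale (rad ?N z) (B (wp ?N z))" by (simp add: \<omega>_def)
          then show ?thesis using z(3) scale_None by (metis comp_apply)
        qed
        have inS: "(B \<circ> wp ?N) z \<in> topspace (open_cone X) - {None}"
          if "z \<in> topspace (subtopology (ST ?N) ?Q)" for z
        proof -
          have zQ: "z \<in> ?Q" using that by simp
          have "(B \<circ> wp ?N) z \<in> topspace (open_cone X)"
            using continuous_map_image_subset_topspace[OF c1] that by blast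
          then show ?thesis using nn[OF zQ] by blast
        qed
        have "continuous_map (subtopology (ST ?N) ?Q) (subtopology (open_cone X) (topspace (open_cone X) - {None})) (B \<circ> wp ?N)"
          unfolding continuous_map_in_subtopology
        proof (intro conjI c1 funcsetI)
          fix z assume "z \<in> topspace (subtopology (ST ?N) ?Q)"
          then show "(B \<circ> wp ?N) z \<in> topspace (open_cone X) - {None}" by (rule inS)
        qed
        then have "continuous_map (subtopology (ST ?N) ?Q) X (xc \<circ> (B \<circ> wp ?N))"
          using cont_xc continuous_map_compose by blast
        then show ?thesis
          by (rule continuous_map_eq) (auto simp: \<omega>_def xc_scale' split: if_splits)
      qed
    qed
    show "\<omega> \<in> extensional (SS ?N)" by (simp add: \<omega>_def)
  qed
  have fw: "singular_face ?N i \<omega> = restrict (\<lambda>v. \<omega> (simplical_face i v)) (SS j)" for i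
    by (simp add: singular_face_def o_def)
  have F1: "singular_face ?N i \<omega> = const_simplex j y" if "i < j" for i
    unfolding fw const_simplex_def
  proof (rule restrict_ext)
    fix v assume v: "v \<in> SS j"
    have u: "simplical_face i v \<in> SS ?N" using face_in_simplex[of i j v] that v by simp
    have "simplical_face i v i = 0" by (simp add: simplical_face_def)
    then have "B (simplical_face i v) = y" unfolding B_def by (rule bf_B3[OF u that _ sb tb])
    then show "\<omega> (simplical_face i v) = y"
      using wface[of i v] v that by simp
  qed
  have F2: "singular_face ?N j \<omega> = \<sigma>"
  proof -
    have "restrict (\<lambda>v. \<omega> (simplical_face j v)) (SS j) = restrict \<sigma> (SS j)"
    proof (rule restrict_ext)
      fix v assume v: "v \<in> SS j"
      have u: "simplical_face j v \<in> SS ?N" using face_in_simplex[of j j v] v by simp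
      have "simplical_face j v j = 0" by (simp add: simplical_face_def)
      then have "B (simplical_face j v) = \<sigma> (del j (simplical_face j v))"
        unfolding B_def by (rule bf_B2[OF u _ sb tb])
      then show "\<omega> (simplical_face j v) = \<sigma> v"
        using wface[of j v] v by simp
    qed
    then show ?thesis using sS unfolding fw by (simp add: singular_simplex_def extensional_restrict)
  qed
  have F3: "singular_face ?N ?N \<omega> = \<tau>"
  proof -
    have "restrict (\<lambda>v. \<omega> (simplical_face ?N v)) (SS j) = restrict \<tau> (SS j)"
    proof (rule restrict_ext)
      fix v assume v: "v \<in> SS j"
      have "simplical_face ?N v ?N = 0" by (simp add: simplical_face_def)
      then have "B (simplical_face ?N v) = \<tau> (del ?N (simplical_face ?N v))"
        unfolding B_def by (rule bf_B1)
      then show "\<omega> (simplical_face ?N v) = \<tau> v"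
        using wface[of ?N v] v by simp
    qed
    then show ?thesis using tS unfolding fw by (simp add: singular_simplex_def extensional_restrict)
  qed
  have wfull: "full n pv ?N \<omega>"
  proof (cases "int n + 1 \<le> pv")
    case True then show ?thesis by (rule full_big)
  next
    case False
    have "const_simplex 0 y (ebasis 0) \<noteq> None"
      using in_gajer_noapex[OF y0 _ ebasis0_in] False by simp
    then have yN: "y \<noteq> None" by (metis const0_val)
    have sA: "poly_dim_le j {u \<in> SS j. \<sigma> u = cone_apex} (int j - (int n + 1) + pv)"
      using full_allowable sG by (auto simp: gajer_def allowable_def)
    have tA: "poly_dim_le j {u \<in> SS j. \<tau> u = cone_apex} (int j - (int n + 1) + pv)"
      using full_allowable tG by (auto simp: gajer_def allowable_def)
    let ?d = "int ?N - (int n + 1) + pv"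
    let ?C = "\<lambda>k \<rho>. {(\<lambda>i. (1-r) * bary (Suc j) i + r * simplical_face k s i) | s r.
                  s \<in> {u \<in> SS j. \<rho> u = cone_apex} \<and> 0 \<le> r \<and> r \<le> 1}"
    have pS: "poly_dim_le ?N (?C j \<sigma>) ?d"
      using poly_cone[OF sA, of j] by (rule poly_dim_le_mono) auto
    have pT: "poly_dim_le ?N (?C ?N \<tau>) ?d"
      using poly_cone[OF tA, of ?N] by (rule poly_dim_le_mono) auto
    have pB: "poly_dim_le ?N {bary ?N} ?d"
      using poly_dim_le_single[OF bary_in] jm by simp
    have sub: "{u \<in> SS ?N. \<omega> u = cone_apex} \<subseteq> ({bary ?N} \<union> ?C j \<sigma>) \<union> ?C ?N \<tau>"
    proof
      fix u assume "u \<in> {u \<in> SS ?N. \<omega> u = cone_apex}"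
      then have u: "u \<in> SS ?N" and wn: "\<omega> u = None" by (auto simp: cone_apex_def)
      show "u \<in> ({bary ?N} \<union> ?C j \<sigma>) \<union> ?C ?N \<tau>"
      proof (cases "rad ?N u = 0")
        case True then show ?thesis using rad_zero[OF u] by simp
      next
        case False
        then have r: "0 < rad ?N u" "rad ?N u \<le> 1" using rad_range[OF u] by auto
        let ?w = "wp ?N u"
        have wb: "?w \<in> bdry ?N" using wp_in[OF u r(1)] .
        then have wS: "?w \<in> SS ?N" by (simp add: bdry_def)
        have Bn: "B ?w = None" using wn u False by (simp add: \<omega>_def)
        have ud: "u = (\<lambda>i. (1 - rad ?N u) * bary ?N i + rad ?N u * ?w i)" using wp_decomp[OF u r(1)] .
        show ?thesis
        proof (cases "?w ?N = 0")
          case True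
          have "\<tau> (del ?N ?w) = cone_apex" using Bn True by (simp add: B_def bf_def cone_apex_def)
          moreover have "del ?N ?w \<in> SS j" using del_in_simplex[OF wS le_refl True] .
          moreover have "simplical_face ?N (del ?N ?w) = ?w" using face_del[of ?w ?N, OF True] .
          ultimately have "u \<in> ?C ?N \<tau>" using r ud
            by (auto intro!: exI[of _ "del ?N ?w"] exI[of _ "rad ?N u"])
          then show ?thesis by blast
        next
          case F1: False
          show ?thesis
          proof (cases "?w j = 0")
            case True
            have "\<sigma> (del j ?w) = cone_apex" using Bn True F1 by (simp add: B_def bf_def cone_apex_def)
            moreover have "del j ?w \<in> SS j" using del_in_simplex[OF wS _ True] by simp
            moreover have "simplical_face j (del j ?w) = ?w" using face_del[of ?w j, OF True] .
            ultimately have "u \<in> ?C j \<sigma>" using r ud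
              by (auto intro!: exI[of _ "del j ?w"] exI[of _ "rad ?N u"])
            then show ?thesis by blast
          next
            case False
            then have "B ?w = y" using F1 by (simp add: B_def bf_def)
            then show ?thesis using Bn yN by simp
          qed
        qed
      qed
    qed
    have "allowable n pv ?N \<omega>"
      unfolding allowable_def
      using poly_dim_le_mono[OF poly_dim_le_Un[OF poly_dim_le_Un[OF pB pS] pT] sub] by simp
    moreover have "full n pv j (singular_face ?N i \<omega>)" if iN: "i \<le> ?N" for i
    proof -
      consider "i < j" | "i = j" | "i = ?N" using iN by linarith
      then show ?thesis
      proof cases
        case 1 then show ?thesis using F1[OF 1] const_full[of y n pv j] yN by simp
      next
        case 2 then show ?thesis using F2 sG by (simp add: gajer_def)
      next
        case 3 then show ?thesis using F3 tG by (simp add: gajer_def)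
      qed
    qed
    ultimately show ?thesis by (rule full_from_faces)
  qed
  have wG: "\<omega> \<in> gajer X n pv ?N" using wS wfull by (simp add: gajer_def)
  show ?thesis
    unfolding shomotopic_def using wG F1 F2 F3 by blast
qed


theorem mainTheorem19:
  fixes X :: "'a topology" and n :: nat and pv :: int and m :: int
  assumes "compact_space X"
    and "m = (int n + 1) - 2 - pv"
  shows "postnikov_stage_cone X n pv m"
  unfolding postnikov_stage_cone_def
proof (intro conjI allI impI)
  fix j x assume j: "int j \<le> m" and x: "x \<in> topspace X"
  have neg: "int (Suc j) - (int n + 1) + pv < 0" using j assms(2) by simp
  show "induces_bij_pi (Sing X) (gajer X n pv) cone_incl j x"
    unfolding induces_bij_pi_def
  proof (intro conjI ballI impI)
    fix \<tau> assume "\<tau> \<in> sphere_reps (gajer X n pv) j (cone_incl x)"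
    then show "\<exists>\<sigma>\<in>sphere_reps (Sing X) j x.
          shomotopic (gajer X n pv) j (cone_incl x) (restrict (cone_incl \<circ> \<sigma>) (standard_simplex j)) \<tau>"
      using partA_surj[OF assms(1) neg x] by blast
  next
    fix \<sigma> \<sigma>' assume "\<sigma> \<in> sphere_reps (Sing X) j x" "\<sigma>' \<in> sphere_reps (Sing X) j x"
      "shomotopic (gajer X n pv) j (cone_incl x) (restrict (cone_incl \<circ> \<sigma>) (standard_simplex j))
          (restrict (cone_incl \<circ> \<sigma>') (standard_simplex j))"
    then show "shomotopic (Sing X) j x \<sigma> \<sigma>'" using partA_inj[OF neg x] by blast
  qed
next
  fix j y assume j: "m < int j" and y: "const_simplex 0 y \<in> gajer X n pv 0"
  have jm: "0 \<le> int j - int n + pv" using j assms(2) by simp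
  show "pi_trivial (gajer X n pv) j y"
    unfolding pi_trivial_def using partB[OF assms(1) jm y] by blast
qed


end
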